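(* Let $n,m$ be even positive integers. If $n\geq 4$ or $m\geq 4$, then the torus $T_{n,m}$ satisfies $T_{n,m}=0$ as an instance of Bipartite Influence. Let $n$ be an even positive integer and $m$ a positive integer. If ($n\geq 4$ and $m$ is even) or $n=4k+2$ for some positive integer $k$, then the cylinder $C_{n,m}$ satisfies $C_{n,m}=0$ as an instance of Bipartite Influence.
   Context: Cylinder $C_{n,m}$ ($n$ even): vertices $v_{i,j}$, $1\le i\le n$, $1\le j\le m$; $v_{i,j}$ and $v_{i',j'}$ are adjacent iff ($i=i'$ and $j=j'\pm1$) or ($j=j'$ and $i\equiv i'\pm1 \pmod n$). Torus $T_{n,m}$ ($n,m$ even): same vertices, adjacent iff ($i=i'$ and $j\equiv j'\pm1\pmod m$) or ($j=j'$ and $i\equiv i'\pm 1\pmod n$). In both, $v_{i,j}$ is black iff $i+j$ is even, white otherwise. Bipartite Influence: isolated vertices are credited to the owner of their colour (black to Left, white to Right); Left picks a black vertex $x$ and removes $x$, its neighbours and the vertices that become isolated (credited to her); Right likewise with white vertices; score = Left's total minus Right's. $G=0$ means $Ls(G+X)=Ls(X)$ and $Rs(G+X)=Rs(X)$ for every position $X$ (disjoint union as sum), where $Ls,Rs$ are optimal scores with Left, resp. Right, moving first. *)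

theory Defs
  imports Main
begin

text \<open>A position of Bipartite Influence: a vertex set V, a colouring
  (True = black, owned by Left; False = white, owned by Right) and an
  adjacency relation.\<close>

type_synonym 'v pos = "'v set \<times> ('v \<Rightarrow> bool) \<times> ('v \<Rightarrow> 'v \<Rightarrow> bool)"

definition pverts :: "'v pos \<Rightarrow> 'v set" where "pverts P = fst P"
definition pblack :: "'v pos \<Rightarrow> 'v \<Rightarrow> bool" where "pblack P = fst (snd P)"
definition padj :: "'v pos \<Rightarrow> 'v \<Rightarrow> 'v \<Rightarrow> bool" where "padj P = snd (snd P)"

definition valid_pos :: "'v pos \<Rightarrow> bool" where
  "valid_pos P \<longleftrightarrow> finite (pverts P)
     \<and> (\<forall>x y. padj P x y \<longrightarrow> padj P y x)
     \<and> (\<forall>x. \<not> padj P x x)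
     \<and> (\<forall>x y. padj P x y \<longrightarrow> x \<in> pverts P \<and> y \<in> pverts P \<and> pblack P x \<noteq> pblack P y)"

definition isolated_in :: "('v \<Rightarrow> 'v \<Rightarrow> bool) \<Rightarrow> 'v set \<Rightarrow> 'v set" where
  "isolated_in E S = {v \<in> S. \<forall>w \<in> S. \<not> E v w}"

text \<open>Vertices removed (and credited to the mover) when x is chosen in the
  induced subgraph on S: x, its neighbours, and the vertices that become isolated.\<close>
definition removed :: "('v \<Rightarrow> 'v \<Rightarrow> bool) \<Rightarrow> 'v set \<Rightarrow> 'v \<Rightarrow> 'v set" where
  "removed E S x = (let C = insert x {y \<in> S. E x y} in C \<union> isolated_in E (S - C))"

text \<open>Optimal score (Left total minus Right total) of the remaining game on the
  vertex set S (which contains no isolated vertices), with fuel k;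
  the flag says whether Left is to move.\<close>
fun gval :: "('v \<Rightarrow> bool) \<Rightarrow> ('v \<Rightarrow> 'v \<Rightarrow> bool) \<Rightarrow> nat \<Rightarrow> bool \<Rightarrow> 'v set \<Rightarrow> int" where
  "gval B E 0 left S = 0"
| "gval B E (Suc k) left S =
     (if S = {} then 0
      else if left then
        Max {int (card (removed E S x)) + gval B E k False (S - removed E S x) | x. x \<in> S \<and> B x}
      else
        Min {- int (card (removed E S y)) + gval B E k True (S - removed E S y) | y. y \<in> S \<and> \<not> B y})"

text \<open>Initially isolated vertices are credited to the owner of their colour.\<close>
definition iso_score :: "'v pos \<Rightarrow> int" where
  "iso_score P = int (card {v \<in> isolated_in (padj P) (pverts P). pblack P v})
               - int (card {v \<in> isolated_in (padj P) (pverts P). \<not> pblack P v})"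

definition core :: "'v pos \<Rightarrow> 'v set" where
  "core P = pverts P - isolated_in (padj P) (pverts P)"

definition Ls :: "'v pos \<Rightarrow> int" where
  "Ls P = iso_score P + gval (pblack P) (padj P) (card (core P)) True (core P)"

definition Rs :: "'v pos \<Rightarrow> int" where
  "Rs P = iso_score P + gval (pblack P) (padj P) (card (core P)) False (core P)"

definition psum :: "'a pos \<Rightarrow> 'b pos \<Rightarrow> ('a + 'b) pos" where
  "psum G X = (Inl ` pverts G \<union> Inr ` pverts X,
               case_sum (pblack G) (pblack X),
               (\<lambda>u w. case (u, w) of
                   (Inl a, Inl b) \<Rightarrow> padj G a b
                 | (Inr a, Inr b) \<Rightarrow> padj X a b
                 | _ \<Rightarrow> False))"

definition is_zero :: "'a pos \<Rightarrow> 'b itself \<Rightarrow> bool" where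
  "is_zero G _ \<longleftrightarrow> (\<forall>X :: 'b pos. valid_pos X \<longrightarrow>
       Ls (psum G X) = Ls X \<and> Rs (psum G X) = Rs X)"

definition cyl_adj :: "nat \<Rightarrow> nat \<Rightarrow> nat \<times> nat \<Rightarrow> nat \<times> nat \<Rightarrow> bool" where
  "cyl_adj n m u w \<longleftrightarrow> u \<in> {1..n} \<times> {1..m} \<and> w \<in> {1..n} \<times> {1..m} \<and>
     ((fst u = fst w \<and> (snd u = snd w + 1 \<or> snd w = snd u + 1)) \<or>
      (snd u = snd w \<and> ((fst u) mod n = (fst w + 1) mod n \<or> (fst w) mod n = (fst u + 1) mod n)))"

definition tor_adj :: "nat \<Rightarrow> nat \<Rightarrow> nat \<times> nat \<Rightarrow> nat \<times> nat \<Rightarrow> bool" where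
  "tor_adj n m u w \<longleftrightarrow> u \<in> {1..n} \<times> {1..m} \<and> w \<in> {1..n} \<times> {1..m} \<and>
     ((fst u = fst w \<and> ((snd u) mod m = (snd w + 1) mod m \<or> (snd w) mod m = (snd u + 1) mod m)) \<or>
      (snd u = snd w \<and> ((fst u) mod n = (fst w + 1) mod n \<or> (fst w) mod n = (fst u + 1) mod n)))"

definition grid_black :: "nat \<times> nat \<Rightarrow> bool" where
  "grid_black u \<longleftrightarrow> even (fst u + snd u)"

definition cylinder :: "nat \<Rightarrow> nat \<Rightarrow> (nat \<times> nat) pos" where
  "cylinder n m = ({1..n} \<times> {1..m}, grid_black, cyl_adj n m)"

definition torus :: "nat \<Rightarrow> nat \<Rightarrow> (nat \<times> nat) pos" where
  "torus n m = ({1..n} \<times> {1..m}, grid_black, tor_adj n m)"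

end

theory Submission
  imports Defs
begin

definition Nc :: "('v \<Rightarrow> 'v \<Rightarrow> bool) \<Rightarrow> 'v set \<Rightarrow> 'v \<Rightarrow> 'v set" where
  "Nc E S x = insert x {y \<in> S. E x y}"
lemma mem_removed:
  "v \<in> removed E S x \<longleftrightarrow> v = x \<or> (v \<in> S \<and> E x v) \<or>
     (v \<in> S \<and> v \<notin> Nc E S x \<and> (\<forall>w\<in>S. w \<notin> Nc E S x \<longrightarrow> \<not> E v w))"
  unfolding removed_def Let_def isolated_in_def Nc_def by blast
lemma removed_subset: "x \<in> S \<Longrightarrow> removed E S x \<subseteq> S"
  unfolding subset_iff mem_removed by blast
lemma x_in_removed: "x \<in> removed E S x"
  unfolding mem_removed by blast
definition noiso :: "('v \<Rightarrow> 'v \<Rightarrow> bool) \<Rightarrow> 'v set \<Rightarrow> bool" where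
  "noiso E S \<longleftrightarrow> (\<forall>v\<in>S. \<exists>w\<in>S. E v w)"

definition val :: "('v \<Rightarrow> bool) \<Rightarrow> ('v \<Rightarrow> 'v \<Rightarrow> bool) \<Rightarrow> bool \<Rightarrow> 'v set \<Rightarrow> int" where
  "val B E p S = gval B E (card S) p S"

lemma card_Diff_removed_less:
  assumes "finite S" "x \<in> S" shows "card (S - removed E S x) < card S"
proof -
  have "x \<in> removed E S x" by (rule x_in_removed)
  hence "S - removed E S x \<subset> S" using assms(2) by blast
  thus ?thesis using assms(1) by (rule psubset_card_mono[rotated])
qed
lemma g0: "gval B E k p {} = 0"
proof (cases k)
  case 0 then show ?thesis by (simp only: gval.simps)
next
  case (Suc j) then show ?thesis by (simp only: gval.simps simp_thms if_True)
qed

lemma gSuc: "S \<noteq> {} \<Longrightarrow> gval B E (Suc k) p S = (if p then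
        Max {int (card (removed E S x)) + gval B E k False (S - removed E S x) | x. x \<in> S \<and> B x}
      else
        Min {- int (card (removed E S y)) + gval B E k True (S - removed E S y) | y. y \<in> S \<and> \<not> B y})"
  by (simp only: gval.simps if_False)
lemma setcomp_image: "{f x | x. x \<in> S \<and> P x} = f ` {x \<in> S. P x}"
  by blast

lemma gval_fuel:
  "finite S \<Longrightarrow> card S \<le> k \<Longrightarrow> card S \<le> k' \<Longrightarrow> gval B E k p S = gval B E k' p S"
proof (induction k arbitrary: k' p S)
  case 0
  hence "S = {}" by simp
  then show ?case by (simp only: g0)
next
  case (Suc k)
  show ?case
  proof (cases "S = {}")
    case True
    then show ?thesis by (simp only: g0)
  next
    case False
    have "card S > 0" using False Suc.prems(1) by (simp add: card_gt_0_iff)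
    hence "k' \<noteq> 0" using Suc.prems(3) by linarith
    then obtain k'' where k'': "k' = Suc k''" using not0_implies_Suc by blast
    have eq: "gval B E k q (S - removed E S x) = gval B E k'' q (S - removed E S x)"
      if "x \<in> S" for x q
    proof -
      have "card (S - removed E S x) < card S" by (rule card_Diff_removed_less[OF Suc.prems(1) that])
      hence "card (S - removed E S x) \<le> k" "card (S - removed E S x) \<le> k''" using Suc.prems k'' by auto
      moreover have "finite (S - removed E S x)" using Suc.prems by simp
      ultimately show ?thesis using Suc.IH by blast
    qed
    have e1: "(\<lambda>x. int (card (removed E S x)) + gval B E k False (S - removed E S x)) ` {x\<in>S. B x}
       = (\<lambda>x. int (card (removed E S x)) + gval B E k'' False (S - removed E S x)) ` {x\<in>S. B x}"
      by (rule image_cong[OF refl]) (simp only: eq mem_Collect_eq)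
    have e2: "(\<lambda>x. - int (card (removed E S x)) + gval B E k True (S - removed E S x)) ` {x\<in>S. \<not> B x}
       = (\<lambda>x. - int (card (removed E S x)) + gval B E k'' True (S - removed E S x)) ` {x\<in>S. \<not> B x}"
      by (rule image_cong[OF refl]) (simp only: eq mem_Collect_eq)
    show ?thesis unfolding k'' gSuc[OF False] setcomp_image e1 e2 ..
  qed
qed
lemma val_empty[simp]: "val B E p {} = 0"
  by (simp only: val_def g0)

lemma val_fuel_eq:
  assumes "finite S" "card S = Suc k" "x \<in> S"
  shows "gval B E k q (S - removed E S x) = val B E q (S - removed E S x)"
proof -
  have "card (S - removed E S x) < card S" by (rule card_Diff_removed_less[OF assms(1,3)])
  hence "card (S - removed E S x) \<le> k" using assms(2) by linarith
  moreover have "finite (S - removed E S x)" using assms(1) by simp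
  ultimately show ?thesis unfolding val_def by (intro gval_fuel) auto
qed

lemma val_L:
  assumes "finite S" "S \<noteq> {}"
  shows "val B E True S = Max ((\<lambda>x. int (card (removed E S x)) + val B E False (S - removed E S x)) ` {x\<in>S. B x})"
proof -
  obtain k where k: "card S = Suc k" using assms by (cases "card S") auto
  have "val B E True S = Max ((\<lambda>x. int (card (removed E S x)) + gval B E k False (S - removed E S x)) ` {x\<in>S. B x})"
    unfolding val_def k gSuc[OF assms(2)] setcomp_image if_True ..
  also have "(\<lambda>x. int (card (removed E S x)) + gval B E k False (S - removed E S x)) ` {x\<in>S. B x}
     = (\<lambda>x. int (card (removed E S x)) + val B E False (S - removed E S x)) ` {x\<in>S. B x}"
    by (rule image_cong[OF refl]) (simp only: val_fuel_eq[OF assms(1) k] mem_Collect_eq)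
  finally show ?thesis .
qed

lemma val_R:
  assumes "finite S" "S \<noteq> {}"
  shows "val B E False S = Min ((\<lambda>x. - int (card (removed E S x)) + val B E True (S - removed E S x)) ` {x\<in>S. \<not> B x})"
proof -
  obtain k where k: "card S = Suc k" using assms by (cases "card S") auto
  have "val B E False S = Min ((\<lambda>x. - int (card (removed E S x)) + gval B E k True (S - removed E S x)) ` {x\<in>S. \<not> B x})"
    unfolding val_def k gSuc[OF assms(2)] setcomp_image if_False ..
  also have "(\<lambda>x. - int (card (removed E S x)) + gval B E k True (S - removed E S x)) ` {x\<in>S. \<not> B x}
     = (\<lambda>x. - int (card (removed E S x)) + val B E True (S - removed E S x)) ` {x\<in>S. \<not> B x}"
    by (rule image_cong[OF refl]) (simp only: val_fuel_eq[OF assms(1) k] mem_Collect_eq)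
  finally show ?thesis .
qed

lemma val_L_ge:
  assumes "finite S" "x \<in> S" "B x"
  shows "int (card (removed E S x)) + val B E False (S - removed E S x) \<le> val B E True S"
proof -
  have ne: "S \<noteq> {}" using assms by auto
  have "x \<in> {x\<in>S. B x}" using assms by simp
  hence "int (card (removed E S x)) + val B E False (S - removed E S x)
     \<le> Max ((\<lambda>x. int (card (removed E S x)) + val B E False (S - removed E S x)) ` {x\<in>S. B x})"
    using assms(1) by (intro Max_ge) auto
  thus ?thesis unfolding val_L[OF assms(1) ne] .
qed

lemma val_R_le:
  assumes "finite S" "x \<in> S" "\<not> B x"
  shows "val B E False S \<le> - int (card (removed E S x)) + val B E True (S - removed E S x)"
proof -
  have ne: "S \<noteq> {}" using assms by auto
  have "x \<in> {x\<in>S. \<not> B x}" using assms by simp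
  hence "Min ((\<lambda>x. - int (card (removed E S x)) + val B E True (S - removed E S x)) ` {x\<in>S. \<not> B x})
      \<le> - int (card (removed E S x)) + val B E True (S - removed E S x)"
    using assms(1) by (intro Min_le) auto
  thus ?thesis unfolding val_R[OF assms(1) ne] .
qed

lemma val_L_ex:
  assumes "finite S" "x0 \<in> S" "B x0"
  shows "\<exists>x\<in>S. B x \<and> val B E True S = int (card (removed E S x)) + val B E False (S - removed E S x)"
proof -
  let ?f = "\<lambda>x. int (card (removed E S x)) + val B E False (S - removed E S x)"
  have ne: "S \<noteq> {}" using assms by auto
  have "Max (?f ` {x\<in>S. B x}) \<in> ?f ` {x\<in>S. B x}"
    using assms by (intro Max_in) auto
  then obtain x where "x \<in> S" "B x" "Max (?f ` {x\<in>S. B x}) = ?f x" by auto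
  thus ?thesis unfolding val_L[OF assms(1) ne] by blast
qed

lemma val_R_ex:
  assumes "finite S" "x0 \<in> S" "\<not> B x0"
  shows "\<exists>x\<in>S. \<not> B x \<and> val B E False S = - int (card (removed E S x)) + val B E True (S - removed E S x)"
proof -
  let ?f = "\<lambda>x. - int (card (removed E S x)) + val B E True (S - removed E S x)"
  have ne: "S \<noteq> {}" using assms by auto
  have "Min (?f ` {x\<in>S. \<not> B x}) \<in> ?f ` {x\<in>S. \<not> B x}"
    using assms by (intro Min_in) auto
  then obtain x where "x \<in> S" "\<not> B x" "Min (?f ` {x\<in>S. \<not> B x}) = ?f x" by auto
  thus ?thesis unfolding val_R[OF assms(1) ne] by blast
qed
lemma bool_neq: "(x::bool) \<noteq> y \<Longrightarrow> z \<noteq> y \<Longrightarrow> x = z"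
  by (cases x; cases y; cases z) simp_all

lemma mem_removed2:
  assumes "x \<in> S"
  shows "v \<in> removed E S x \<longleftrightarrow> v \<in> S \<and> (v = x \<or> E x v \<or> \<not>(\<exists>w\<in>S. w \<noteq> x \<and> \<not> E x w \<and> E v w))"
  using assms unfolding mem_removed Nc_def insert_iff mem_Collect_eq by blast

definition Fin :: "('v \<Rightarrow> 'v \<Rightarrow> bool) \<Rightarrow> 'v set \<Rightarrow> 'v \<Rightarrow> 'v \<Rightarrow> 'v set" where
  "Fin E T a b = {v \<in> T. v \<noteq> a \<and> \<not> E a v \<and> v \<noteq> b \<and> \<not> E b v \<and>
      (\<exists>u\<in>T. u \<noteq> a \<and> \<not> E a u \<and> u \<noteq> b \<and> \<not> E b u \<and> E v u)}"

lemma Fin_sym: "Fin E T a b = Fin E T b a"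
  unfolding Fin_def by blast

lemma seq_removed:
  assumes sym: "\<And>a b. E a b \<Longrightarrow> E b a"
    and a: "a \<in> T" and b: "b \<in> T - removed E T a"
  shows "T - removed E T a - removed E (T - removed E T a) b = Fin E T a b"
proof (rule set_eqI, rule iffI)
  fix v
  assume v: "v \<in> T - removed E T a - removed E (T - removed E T a) b"
  have b1: "b \<in> T" "b \<noteq> a" "\<not> E a b" using b unfolding Diff_iff mem_removed2[OF a] by blast+
  have v1: "v \<in> T" "v \<noteq> a" "\<not> E a v" using v unfolding Diff_iff mem_removed2[OF a] by blast+
  have v2: "v \<noteq> b" "\<not> E b v" "\<exists>w\<in>T - removed E T a. w \<noteq> b \<and> \<not> E b w \<and> E v w"
    using v unfolding Diff_iff[of v "T - removed E T a"] mem_removed2[OF b] by blast+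
  then obtain w where w: "w \<in> T - removed E T a" "w \<noteq> b" "\<not> E b w" "E v w" by blast
  have "w \<in> T" "w \<noteq> a" "\<not> E a w" using w(1) unfolding Diff_iff mem_removed2[OF a] by blast+
  thus "v \<in> Fin E T a b" unfolding Fin_def using v1 v2 w by blast
next
  fix v
  assume v: "v \<in> Fin E T a b"
  then obtain u where v1: "v \<in> T" "v \<noteq> a" "\<not> E a v" "v \<noteq> b" "\<not> E b v"
     and u: "u \<in> T" "u \<noteq> a" "\<not> E a u" "u \<noteq> b" "\<not> E b u" "E v u"
    unfolding Fin_def by blast
  have vR: "v \<in> T - removed E T a" unfolding Diff_iff mem_removed2[OF a] using v1 u by blast
  have uR: "u \<in> T - removed E T a" unfolding Diff_iff mem_removed2[OF a] using v1 u sym by blast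
  have "v \<notin> removed E (T - removed E T a) b"
    unfolding mem_removed2[OF b] using v1 u uR by blast
  thus "v \<in> T - removed E T a - removed E (T - removed E T a) b" using vR by blast
qed

lemma removed_sub_Fin:
  assumes a: "a \<in> T"
  shows "removed E T a \<subseteq> T - Fin E T a b"
  unfolding subset_iff Diff_iff mem_removed2[OF a] Fin_def mem_Collect_eq by blast

lemma Fin_opp:
  fixes B :: "'v \<Rightarrow> bool"
  assumes sym: "\<And>a b. E a b \<Longrightarrow> E b a" and bip: "\<And>a b. E a b \<Longrightarrow> B a \<noteq> B b" and a: "a \<in> T" and b: "b \<in> T" and ab: "B a \<noteq> B b"
  shows "T - Fin E T a b \<subseteq> removed E T a \<union> removed E T b"
proof
  fix v assume v: "v \<in> T - Fin E T a b"
  show "v \<in> removed E T a \<union> removed E T b"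
  proof (rule ccontr)
    assume "v \<notin> removed E T a \<union> removed E T b"
    then obtain w1 w2 where c: "v \<in> T" "v \<noteq> a" "\<not> E a v" "v \<noteq> b" "\<not> E b v"
      "w1 \<in> T" "w1 \<noteq> a" "\<not> E a w1" "E v w1" "w2 \<in> T" "w2 \<noteq> b" "\<not> E b w2" "E v w2"
      using v unfolding Un_iff mem_removed2[OF a] mem_removed2[OF b] Diff_iff by blast
    have "\<not> (w1 \<noteq> b \<and> \<not> E b w1)" using v c unfolding Fin_def Diff_iff mem_Collect_eq by blast
    hence "w1 = b \<or> E b w1" by blast
    hence e1: "E b w1" using c sym by blast
    have "\<not> (w2 \<noteq> a \<and> \<not> E a w2)" using v c unfolding Fin_def Diff_iff mem_Collect_eq by blast
    hence e2: "E a w2" using c sym by blast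
    have b1: "B b \<noteq> B w1" "B v \<noteq> B w1" "B a \<noteq> B w2" "B v \<noteq> B w2" using bip e1 e2 c by blast+
    have "B v = B b" by (rule bool_neq[OF b1(2) b1(1)])
    moreover have "B v = B a" by (rule bool_neq[OF b1(4) b1(3)])
    ultimately show False using ab by simp
  qed
qed

lemma Fin_sub:
  assumes sym: "\<And>a b. E a b \<Longrightarrow> E b a" and a: "a \<in> T" and b: "b \<in> T"
    and an: "a \<noteq> b" "\<not> E b a" and ar: "a \<in> removed E T b"
  shows "T - Fin E T a b \<subseteq> removed E T b"
proof
  fix v assume v: "v \<in> T - Fin E T a b"
  have aiso: "\<forall>w\<in>T. E a w \<longrightarrow> w = b \<or> E b w"
    using ar an unfolding mem_removed2[OF b] by blast
  show "v \<in> removed E T b"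
  proof (rule ccontr)
    assume nv: "v \<notin> removed E T b"
    then obtain w where w: "w \<in> T" "w \<noteq> b" "\<not> E b w" "E v w" and v1: "v \<noteq> b" "\<not> E b v"
      using v unfolding mem_removed2[OF b] Diff_iff by blast
    have "v \<noteq> a" using nv ar by blast
    moreover have "\<not> E a v" using aiso v1 v by blast
    moreover have "w \<noteq> a"
    proof
      assume "w = a" hence "E a v" using w sym by blast
      thus False using aiso v1 v by blast
    qed
    moreover have "\<not> E a w" using aiso w by blast
    ultimately have "v \<in> Fin E T a b" using v w v1 unfolding Fin_def Diff_iff mem_Collect_eq by blast
    thus False using v by blast
  qed
qed
lemma card_removed_split:
  assumes "finite S" "x \<in> S"
  shows "card (S - removed E S x) + card (removed E S x) = card S"
proof -
  have sub: "removed E S x \<subseteq> S" by (rule removed_subset[OF assms(2)])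
  have "card (S - removed E S x) = card S - card (removed E S x)"
    by (rule card_Diff_subset[OF finite_subset[OF sub assms(1)] sub])
  moreover have "card (removed E S x) \<le> card S" by (rule card_mono[OF assms(1) sub])
  ultimately show ?thesis by linarith
qed

lemma Fin_subset: "Fin E T a b \<subseteq> T"
  unfolding Fin_def by blast

lemma noiso_Diff_removed:
  assumes sym: "\<And>a b. E a b \<Longrightarrow> E b a" and x: "x \<in> S"
  shows "noiso E (S - removed E S x)"
  unfolding noiso_def
proof
  fix v assume v: "v \<in> S - removed E S x"
  then obtain w where w: "w \<in> S" "w \<noteq> x" "\<not> E x w" "E v w" and v1: "v \<in> S" "v \<noteq> x" "\<not> E x v"
    unfolding Diff_iff mem_removed2[OF x] by blast
  have "w \<notin> removed E S x" unfolding mem_removed2[OF x] using w v1 sym by blast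
  thus "\<exists>w\<in>S - removed E S x. E v w" using w by blast
qed

lemma ex_colours:
  fixes B :: "'v \<Rightarrow> bool"
  assumes bip: "\<And>a b. E a b \<Longrightarrow> B a \<noteq> B b" and ni: "noiso E S" and v: "v \<in> S"
  shows "\<exists>x\<in>S. B x" "\<exists>x\<in>S. \<not> B x"
proof -
  obtain w where w: "w \<in> S" "E v w" using ni v unfolding noiso_def by blast
  have "B v \<noteq> B w" using bip w by blast
  thus "\<exists>x\<in>S. B x" "\<exists>x\<in>S. \<not> B x" using v w by (cases "B v"; auto)+
qed

lemma val_bound:
  fixes B :: "'v \<Rightarrow> bool"
  assumes sym: "\<And>a b. E a b \<Longrightarrow> E b a" and bip: "\<And>a b. E a b \<Longrightarrow> B a \<noteq> B b"
  shows "finite S \<Longrightarrow> noiso E S \<Longrightarrow> \<bar>val B E p S\<bar> \<le> int (card S)"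
proof (induction "card S" arbitrary: S p rule: less_induct)
  case less
  show ?case
  proof (cases "S = {}")
    case True thus ?thesis by simp
  next
    case False
    then obtain v where v: "v \<in> S" by blast
    have IH: "\<bar>val B E q (S - removed E S x)\<bar> \<le> int (card (S - removed E S x))" if "x \<in> S" for x q
      using less.hyps[OF card_Diff_removed_less[OF less.prems(1) that]] less.prems
        noiso_Diff_removed[OF sym that] by simp
    have cs: "int (card (S - removed E S x)) + int (card (removed E S x)) = int (card S)" if "x \<in> S" for x
      using card_removed_split[OF less.prems(1) that, of E] by linarith
    show ?thesis
    proof (cases p)
      case True
      obtain x where x: "x \<in> S" "B x" "val B E True S = int (card (removed E S x)) + val B E False (S - removed E S x)"
        using val_L_ex[OF less.prems(1)] ex_colours(1)[where E=E and B=B, OF bip less.prems(2) v] by blast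
      have pT: "p = True" using True by simp
      show ?thesis unfolding pT using x IH[OF x(1), of False] cs[OF x(1)] by linarith
    next
      case False
      obtain x where x: "x \<in> S" "\<not> B x" "val B E False S = - int (card (removed E S x)) + val B E True (S - removed E S x)"
        using val_R_ex[OF less.prems(1)] ex_colours(2)[where E=E and B=B, OF bip less.prems(2) v] by blast
      have pF: "p = False" using False by simp
      show ?thesis unfolding pF using x IH[OF x(1), of True] cs[OF x(1)] by linarith
    qed
  qed
qed

lemma card_seq:
  assumes sym: "\<And>a b. E a b \<Longrightarrow> E b a" and fin: "finite T"
    and a: "a \<in> T" and b: "b \<in> T - removed E T a"
  shows "card (T - Fin E T a b) = card (removed E T a) + card (removed E (T - removed E T a) b)"
proof -
  let ?Ra = "removed E T a" and ?Rb = "removed E (T - removed E T a) b"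
  have s1: "?Ra \<subseteq> T" by (rule removed_subset[OF a])
  have s2: "?Rb \<subseteq> T - ?Ra" by (rule removed_subset[OF b])
  have "T - Fin E T a b = ?Ra \<union> ?Rb"
    using seq_removed[OF sym a b] s1 s2 by blast
  moreover have "?Ra \<inter> ?Rb = {}" using s2 by blast
  moreover have "finite ?Ra" "finite ?Rb" using s1 s2 fin finite_subset by blast+
  ultimately show ?thesis by (simp add: card_Un_disjoint)
qed
lemma NZ:
  fixes B :: "'v \<Rightarrow> bool"
  assumes sym: "\<And>a b. E a b \<Longrightarrow> E b a" and bip: "\<And>a b. E a b \<Longrightarrow> B a \<noteq> B b"
  shows "finite T \<Longrightarrow> noiso E T \<Longrightarrow> x \<in> T \<Longrightarrow> B x \<Longrightarrow>
     val B E False T \<le> int (card (removed E T x)) + val B E False (T - removed E T x) \<and>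
     val B E True T \<le> int (card (removed E T x)) + val B E True (T - removed E T x)"
proof (induction "card T" arbitrary: T x rule: less_induct)
  case less
  note fin = less.prems(1) and ni = less.prems(2) and xT = less.prems(3) and Bx = less.prems(4)
  define R where "R = (\<lambda>y. removed E T y)"
  have Rsub: "R y \<subseteq> T" if "y \<in> T" for y unfolding R_def by (rule removed_subset[OF that])
  have smaller: "card (T - R y) < card T" if "y \<in> T" for y
    unfolding R_def by (rule card_Diff_removed_less[OF fin that])
  have finD: "finite (T - R y)" for y using fin by simp
  have niD: "noiso E (T - R y)" if "y \<in> T" for y unfolding R_def by (rule noiso_Diff_removed[OF sym that])
  have IH: "val B E False U \<le> int (card (removed E U z)) + val B E False (U - removed E U z) \<and>
     val B E True U \<le> int (card (removed E U z)) + val B E True (U - removed E U z)"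
    if "card U < card T" "finite U" "noiso E U" "z \<in> U" "B z" for U z
    using less.hyps that by blast
  have wNZ: "val B E False U \<le> val B E True U"
    if cU: "card U < card T" and fU: "finite U" and nU: "noiso E U" for U
  proof (cases "U = {}")
    case True thus ?thesis by simp
  next
    case False
    then obtain u where "u \<in> U" by blast
    then obtain z where z: "z \<in> U" "B z" using ex_colours(1)[where E=E and B=B, OF bip nU] by blast
    have "val B E False U \<le> int (card (removed E U z)) + val B E False (U - removed E U z)"
      using IH[OF cU fU nU z] by blast
    also have "\<dots> \<le> val B E True U" by (rule val_L_ge[where B=B and E=E, OF fU z])
    finally show ?thesis .
  qed
  have cardR: "int (card (T - Fin E T a b)) = int (card (R a)) + int (card (removed E (T - R a) b))"
    if "a \<in> T" "b \<in> T - R a" for a b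
    using card_seq[where b=b, OF sym fin that(1)] that(2) unfolding R_def by simp
  have seqR: "T - R a - removed E (T - R a) b = Fin E T a b" if "a \<in> T" "b \<in> T - R a" for a b
    using seq_removed[where b=b, OF sym that(1)] that(2) unfolding R_def by simp
  have PR: "val B E False T \<le> int (card (R x)) + val B E False (T - R x)"
  proof (cases "T - R x = {}")
    case True
    have "R x = T" using True Rsub[OF xT] by blast
    moreover have "\<bar>val B E False T\<bar> \<le> int (card T)" by (rule val_bound[OF sym bip fin ni])
    ultimately show ?thesis using True by simp
  next
    case False
    then obtain v where "v \<in> T - R x" by blast
    then obtain w0 where "w0 \<in> T - R x" "\<not> B w0"
      using ex_colours(2)[where E=E and B=B, OF bip niD[OF xT]] by blast
    then obtain w where w: "w \<in> T - R x" "\<not> B w"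
      and vw: "val B E False (T - R x) = - int (card (removed E (T - R x) w)) + val B E True (T - R x - removed E (T - R x) w)"
      using val_R_ex[where B=B and E=E, OF finD] by blast
    have wT: "w \<in> T" using w by blast
    have F1: "T - R x - removed E (T - R x) w = Fin E T x w" by (rule seqR[OF xT w(1)])
    have vw': "val B E False (T - R x) = - int (card (removed E (T - R x) w)) + val B E True (Fin E T x w)"
      using vw unfolding F1 .
    have c1: "int (card (T - Fin E T x w)) = int (card (R x)) + int (card (removed E (T - R x) w))"
      by (rule cardR[OF xT w(1)])
    have step1: "val B E False T \<le> - int (card (R w)) + val B E True (T - R w)"
      unfolding R_def by (rule val_R_le[where B=B and E=E, OF fin wT w(2)])
    have nxw: "x \<noteq> w" "\<not> E x w" using w(1) unfolding R_def Diff_iff mem_removed2[OF xT] by blast+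
    have nwx: "\<not> E w x" using nxw(2) sym by blast
    show ?thesis
    proof (cases "x \<in> T - R w")
      case True
      have F2: "T - R w - removed E (T - R w) x = Fin E T x w"
        using seqR[OF wT True] Fin_sym[of E T w x] by simp
      have c2: "int (card (T - Fin E T x w)) = int (card (R w)) + int (card (removed E (T - R w) x))"
        using cardR[OF wT True] Fin_sym[of E T w x] by simp
      have "val B E True (T - R w) \<le> int (card (removed E (T - R w) x)) + val B E True (T - R w - removed E (T - R w) x)"
        using IH[OF smaller[OF wT] finD niD[OF wT] True Bx] by blast
      hence s2: "val B E True (T - R w) \<le> int (card (removed E (T - R w) x)) + val B E True (Fin E T x w)"
        unfolding F2 .
      have bxw: "B x \<noteq> B w" using Bx w(2) by simp
      have "T - Fin E T x w \<subseteq> R x \<union> R w"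
        unfolding R_def by (rule Fin_opp[where B=B and E=E, OF sym bip xT wT bxw])
      hence "card (T - Fin E T x w) \<le> card (R x \<union> R w)"
        using fin finite_subset[OF Rsub[OF xT] fin] finite_subset[OF Rsub[OF wT] fin] by (intro card_mono) auto
      also have "\<dots> \<le> card (R x) + card (R w)" by (rule card_Un_le)
      finally have c3: "int (card (T - Fin E T x w)) \<le> int (card (R x)) + int (card (R w))" by linarith
      show ?thesis using step1 s2 c1 c2 c3 vw' by linarith
    next
      case False
      hence xRw: "x \<in> R w" using xT by blast
      have "T - Fin E T x w \<subseteq> R w"
        unfolding R_def by (rule Fin_sub[where E=E, OF sym xT wT nxw(1) nwx xRw[unfolded R_def]])
      moreover have "R w \<subseteq> T - Fin E T w x" unfolding R_def by (rule removed_sub_Fin[OF wT])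
      ultimately have eqF: "T - Fin E T x w = R w" using Fin_sym[of E T w x] by blast
      hence "Fin E T x w = T - R w" using Fin_subset[of E T x w] by blast
      hence "val B E True (T - R w) = val B E True (Fin E T x w)" by simp
      thus ?thesis using step1 c1 eqF vw' by simp
    qed
  qed
  have PL: "val B E True T \<le> int (card (R x)) + val B E True (T - R x)"
  proof -
    obtain z where z: "z \<in> T" "B z" and vz: "val B E True T = int (card (R z)) + val B E False (T - R z)"
      using val_L_ex[where B=B and E=E, OF fin xT Bx] unfolding R_def by blast
    have wx: "val B E False (T - R x) \<le> val B E True (T - R x)"
      by (rule wNZ[OF smaller[OF xT] finD niD[OF xT]])
    show ?thesis
    proof (cases "x \<in> T - R z")
      case True
      have F2: "T - R z - removed E (T - R z) x = Fin E T z x" by (rule seqR[OF z(1) True])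
      have c2: "int (card (T - Fin E T z x)) = int (card (R z)) + int (card (removed E (T - R z) x))"
        by (rule cardR[OF z(1) True])
      have "val B E False (T - R z) \<le> int (card (removed E (T - R z) x)) + val B E False (T - R z - removed E (T - R z) x)"
        using IH[OF smaller[OF z(1)] finD niD[OF z(1)] True Bx] by blast
      hence s1: "val B E True T \<le> int (card (T - Fin E T z x)) + val B E False (Fin E T z x)"
        unfolding F2 using vz c2 by linarith
      show ?thesis
      proof (cases "z \<in> T - R x")
        case True
        have F3: "T - R x - removed E (T - R x) z = Fin E T z x"
          using seqR[OF xT True] Fin_sym[of E T x z] by simp
        have c3: "int (card (T - Fin E T z x)) = int (card (R x)) + int (card (removed E (T - R x) z))"
          using cardR[OF xT True] Fin_sym[of E T x z] by simp
        have "int (card (removed E (T - R x) z)) + val B E False (T - R x - removed E (T - R x) z) \<le> val B E True (T - R x)"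
          using val_L_ge[where B=B and E=E, OF finD True z(2)] .
        thus ?thesis using s1 F3 c3 by simp
      next
        case False
        hence zRx: "z \<in> R x" using z by blast
        have zx: "z \<noteq> x" using True zRx unfolding R_def using x_in_removed by blast
        have nE: "\<not> E x z" using bip Bx z(2) by blast
        have "T - Fin E T z x \<subseteq> R x"
          unfolding R_def by (rule Fin_sub[where E=E, OF sym z(1) xT zx nE zRx[unfolded R_def]])
        moreover have "R x \<subseteq> T - Fin E T x z" unfolding R_def by (rule removed_sub_Fin[OF xT])
        ultimately have eqF: "T - Fin E T z x = R x" using Fin_sym[of E T x z] by blast
        hence "Fin E T z x = T - R x" using Fin_subset[of E T z x] by blast
        thus ?thesis using s1 eqF wx by simp
      qed
    next
      case False
      hence xRz: "x \<in> R z" using xT by blast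
      show ?thesis
      proof (cases "x = z")
        case True
        thus ?thesis using vz wx by simp
      next
        case False
        have nE: "\<not> E z x" using bip Bx z(2) by blast
        have "T - Fin E T x z \<subseteq> R z"
          unfolding R_def by (rule Fin_sub[where E=E, OF sym xT z(1) False nE xRz[unfolded R_def]])
        moreover have "R z \<subseteq> T - Fin E T z x" unfolding R_def by (rule removed_sub_Fin[OF z(1)])
        ultimately have eqF: "T - Fin E T x z = R z" using Fin_sym[of E T z x] by blast
        show ?thesis
        proof (cases "z \<in> T - R x")
          case True
          have F3: "T - R x - removed E (T - R x) z = Fin E T x z" by (rule seqR[OF xT True])
          have c3: "int (card (T - Fin E T x z)) = int (card (R x)) + int (card (removed E (T - R x) z))"
            by (rule cardR[OF xT True])
          have F4: "Fin E T x z = T - R z" using eqF Fin_subset[of E T x z] by blast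
          have "int (card (removed E (T - R x) z)) + val B E False (T - R x - removed E (T - R x) z) \<le> val B E True (T - R x)"
            using val_L_ge[where B=B and E=E, OF finD True z(2)] .
          thus ?thesis using F3 F4 c3 eqF vz by simp
        next
          case False
          hence zRx: "z \<in> R x" using z by blast
          have zx: "z \<noteq> x" using \<open>x \<noteq> z\<close> by blast
          have nE2: "\<not> E x z" using bip Bx z(2) by blast
          have "T - Fin E T z x \<subseteq> R x"
            unfolding R_def by (rule Fin_sub[where E=E, OF sym z(1) xT zx nE2 zRx[unfolded R_def]])
          hence "R z \<subseteq> R x" using eqF Fin_sym[of E T z x] by blast
          moreover have "R x \<subseteq> R z" using removed_sub_Fin[where E=E and b=z, OF xT] eqF unfolding R_def by blast
          ultimately have "R x = R z" by blast
          thus ?thesis using vz wx by simp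
        qed
      qed
    qed
  qed
  show ?case using PR PL unfolding R_def by blast
qed

lemma wNZ:
  fixes B :: "'v \<Rightarrow> bool"
  assumes sym: "\<And>a b. E a b \<Longrightarrow> E b a" and bip: "\<And>a b. E a b \<Longrightarrow> B a \<noteq> B b"
    and fin: "finite U" and ni: "noiso E U"
  shows "val B E False U \<le> val B E True U"
proof (cases "U = {}")
  case True thus ?thesis by simp
next
  case False
  then obtain u where "u \<in> U" by blast
  then obtain z where z: "z \<in> U" "B z" using ex_colours(1)[where E=E and B=B, OF bip ni] by blast
  have "val B E False U \<le> int (card (removed E U z)) + val B E False (U - removed E U z)"
    using NZ[where E=E and B=B, OF sym bip fin ni z] by blast
  also have "\<dots> \<le> val B E True U" by (rule val_L_ge[where B=B and E=E, OF fin z])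
  finally show ?thesis .
qed
lemma noiso_Un: "noiso E A \<Longrightarrow> noiso E Y \<Longrightarrow> noiso E (A \<union> Y)"
  unfolding noiso_def by blast

lemma removed_disj:
  assumes PQ: "P \<inter> Q = {}" and cross: "\<forall>p\<in>P. \<forall>q\<in>Q. \<not> E p q \<and> \<not> E q p"
    and nQ: "noiso E Q" and x: "x \<in> P"
  shows "removed E (P \<union> Q) x = removed E P x"
proof (rule set_eqI)
  fix v
  have xU: "x \<in> P \<union> Q" using x by blast
  show "v \<in> removed E (P \<union> Q) x \<longleftrightarrow> v \<in> removed E P x"
  proof (cases "v \<in> Q")
    case True
    obtain w where w: "w \<in> Q" "E v w" using nQ True unfolding noiso_def by blast
    have "v \<noteq> x" "\<not> E x v" "w \<noteq> x" "\<not> E x w" using True w x cross PQ by blast+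
    hence "v \<notin> removed E (P \<union> Q) x" unfolding mem_removed2[OF xU] using w by blast
    moreover have "v \<notin> removed E P x" using removed_subset[OF x, of E] True PQ by blast
    ultimately show ?thesis by blast
  next
    case False
    have "(\<exists>w\<in>P \<union> Q. w \<noteq> x \<and> \<not> E x w \<and> E v w) \<longleftrightarrow> (\<exists>w\<in>P. w \<noteq> x \<and> \<not> E x w \<and> E v w)"
      if "v \<in> P" using that cross by blast
    thus ?thesis unfolding mem_removed2[OF xU] mem_removed2[OF x] using False by blast
  qed
qed

lemma zero_main:
  fixes B :: "'v \<Rightarrow> bool" and \<sigma> :: "'v \<Rightarrow> 'v" and Good :: "'v set \<Rightarrow> bool" and W :: "'v set"
  assumes sym: "\<And>a b. E a b \<Longrightarrow> E b a" and bip: "\<And>a b. E a b \<Longrightarrow> B a \<noteq> B b"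
    and good: "\<And>A. Good A \<Longrightarrow> finite A \<and> noiso E A \<and> A \<inter> W = {} \<and> (\<forall>a\<in>A. \<forall>b\<in>W. \<not> E a b)"
    and mirror: "\<And>A x. Good A \<Longrightarrow> x \<in> A \<Longrightarrow> \<sigma> x \<in> A - removed E A x \<and> B (\<sigma> x) \<noteq> B x \<and>
        card (removed E (A - removed E A x) (\<sigma> x)) = card (removed E A x) \<and>
        Good (A - removed E A x - removed E (A - removed E A x) (\<sigma> x))"
  shows "Good A \<Longrightarrow> Y \<subseteq> W \<Longrightarrow> finite Y \<Longrightarrow> noiso E Y \<Longrightarrow>
     val B E True (A \<union> Y) = val B E True Y \<and> val B E False (A \<union> Y) = val B E False Y"
proof (induction "card A + card Y" arbitrary: A Y rule: less_induct)
  case less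
  note gA = less.prems(1) and YW = less.prems(2) and fY = less.prems(3) and nY = less.prems(4)
  have fA: "finite A" and nA: "noiso E A" and AW: "A \<inter> W = {}" and crossW: "\<forall>a\<in>A. \<forall>b\<in>W. \<not> E a b"
    using good[OF gA] by blast+
  have AY: "A \<inter> Y = {}" using AW YW by blast
  have cross: "\<forall>p\<in>A. \<forall>q\<in>Y. \<not> E p q \<and> \<not> E q p" using crossW YW sym by blast
  have cross': "\<forall>p\<in>Y. \<forall>q\<in>A. \<not> E p q \<and> \<not> E q p" using cross by blast
  let ?T = "A \<union> Y"
  have fT: "finite ?T" using fA fY by blast
  have nT: "noiso E ?T" by (rule noiso_Un[OF nA nY])
  have remY: "removed E ?T y = removed E Y y" if "y \<in> Y" for y
    using removed_disj[OF _ cross' nA that] AY by (simp add: Un_commute Int_commute)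
  have restY: "?T - removed E ?T y = A \<union> (Y - removed E Y y)" if "y \<in> Y" for y
    using remY[OF that] removed_subset[OF that, of E] AY by blast
  have IHY: "val B E p (A \<union> (Y - removed E Y y)) = val B E p (Y - removed E Y y)" if "y \<in> Y" for y p
  proof -
    have "card (Y - removed E Y y) < card Y" by (rule card_Diff_removed_less[OF fY that])
    hence "card A + card (Y - removed E Y y) < card A + card Y" by linarith
    moreover have "Y - removed E Y y \<subseteq> W" using YW by blast
    moreover have "finite (Y - removed E Y y)" using fY by blast
    moreover have "noiso E (Y - removed E Y y)" by (rule noiso_Diff_removed[OF sym that])
    ultimately have "val B E True (A \<union> (Y - removed E Y y)) = val B E True (Y - removed E Y y) \<and>
        val B E False (A \<union> (Y - removed E Y y)) = val B E False (Y - removed E Y y)"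
      using less.hyps gA by blast
    thus ?thesis by (cases p) simp_all
  qed
  \<comment> \<open>moves in A, followed by the mirror move\<close>
  have mv: "removed E ?T x = removed E A x \<and> ?T - removed E ?T x = (A - removed E A x) \<union> Y \<and>
      \<sigma> x \<in> (A - removed E A x) \<union> Y \<and> B (\<sigma> x) \<noteq> B x \<and>
      removed E ((A - removed E A x) \<union> Y) (\<sigma> x) = removed E (A - removed E A x) (\<sigma> x) \<and>
      (A - removed E A x) \<union> Y - removed E ((A - removed E A x) \<union> Y) (\<sigma> x)
        = (A - removed E A x - removed E (A - removed E A x) (\<sigma> x)) \<union> Y \<and>
      card (removed E (A - removed E A x) (\<sigma> x)) = card (removed E A x) \<and>
      val B E True ((A - removed E A x - removed E (A - removed E A x) (\<sigma> x)) \<union> Y) = val B E True Y \<and>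
      val B E False ((A - removed E A x - removed E (A - removed E A x) (\<sigma> x)) \<union> Y) = val B E False Y"
    if xA: "x \<in> A" for x
  proof -
    let ?R = "removed E A x"
    let ?A1 = "A - ?R"
    have m: "\<sigma> x \<in> ?A1" "B (\<sigma> x) \<noteq> B x" "card (removed E ?A1 (\<sigma> x)) = card ?R"
      "Good (?A1 - removed E ?A1 (\<sigma> x))" using mirror[OF gA xA] by blast+
    have r1: "removed E ?T x = ?R" by (rule removed_disj[OF AY cross nY xA])
    have r1s: "?R \<subseteq> A" by (rule removed_subset[OF xA])
    have AY1: "?A1 \<inter> Y = {}" using AY by blast
    have cross1: "\<forall>p\<in>?A1. \<forall>q\<in>Y. \<not> E p q \<and> \<not> E q p" using cross by blast
    have r2: "removed E (?A1 \<union> Y) (\<sigma> x) = removed E ?A1 (\<sigma> x)"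
      by (rule removed_disj[OF AY1 cross1 nY m(1)])
    have r2s: "removed E ?A1 (\<sigma> x) \<subseteq> ?A1" by (rule removed_subset[OF m(1)])
    have sub: "?A1 - removed E ?A1 (\<sigma> x) \<subset> A" using xA x_in_removed[of x E A] by blast
    have "card (?A1 - removed E ?A1 (\<sigma> x)) < card A" by (rule psubset_card_mono[OF fA sub])
    hence "card (?A1 - removed E ?A1 (\<sigma> x)) + card Y < card A + card Y" by linarith
    hence IH: "val B E True ((?A1 - removed E ?A1 (\<sigma> x)) \<union> Y) = val B E True Y \<and>
               val B E False ((?A1 - removed E ?A1 (\<sigma> x)) \<union> Y) = val B E False Y"
      using less.hyps m(4) YW fY nY by blast
    have e1: "?T - removed E ?T x = ?A1 \<union> Y" using r1 r1s AY by blast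
    have e2: "?A1 \<union> Y - removed E (?A1 \<union> Y) (\<sigma> x) = (?A1 - removed E ?A1 (\<sigma> x)) \<union> Y"
      using r2 r2s AY by blast
    show ?thesis using r1 e1 m r2 e2 IH by blast
  qed
  have i: "val B E True ?T \<le> val B E True Y" if ne: "?T \<noteq> {}"
  proof -
    obtain v where "v \<in> ?T" using ne by blast
    then obtain z0 where "z0 \<in> ?T" "B z0" using ex_colours(1)[where E=E and B=B, OF bip nT] by blast
    then obtain z where z: "z \<in> ?T" "B z" and vz: "val B E True ?T = int (card (removed E ?T z)) + val B E False (?T - removed E ?T z)"
      using val_L_ex[where B=B and E=E, OF fT] by blast
    show ?thesis
    proof (cases "z \<in> Y")
      case True
      have "val B E True ?T = int (card (removed E Y z)) + val B E False (Y - removed E Y z)"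
        using vz remY[OF True] restY[OF True] IHY[OF True] by simp
      also have "\<dots> \<le> val B E True Y" by (rule val_L_ge[where B=B and E=E, OF fY True z(2)])
      finally show ?thesis .
    next
      case False
      hence zA: "z \<in> A" using z by blast
      note M = mv[OF zA]
      let ?A1 = "A - removed E A z"
      have fT1: "finite (?A1 \<union> Y)" using fA fY by blast
      have "val B E False (?A1 \<union> Y) \<le> - int (card (removed E (?A1 \<union> Y) (\<sigma> z))) + val B E True (?A1 \<union> Y - removed E (?A1 \<union> Y) (\<sigma> z))"
        by (rule val_R_le[where B=B and E=E, OF fT1]) (use M z(2) in auto)
      moreover have "?A1 \<union> Y - removed E (?A1 \<union> Y) (\<sigma> z) = (?A1 - removed E ?A1 (\<sigma> z)) \<union> Y"
        using M by blast
      moreover have "removed E (?A1 \<union> Y) (\<sigma> z) = removed E ?A1 (\<sigma> z)" using M by blast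
      moreover have "card (removed E ?A1 (\<sigma> z)) = card (removed E A z)" using M by blast
      moreover have "val B E True ((?A1 - removed E ?A1 (\<sigma> z)) \<union> Y) = val B E True Y" using M by blast
      moreover have "removed E ?T z = removed E A z" "?T - removed E ?T z = ?A1 \<union> Y" using M by blast+
      ultimately show ?thesis using vz by simp
    qed
  qed
  have ii: "val B E False Y \<le> val B E False ?T" if ne: "?T \<noteq> {}"
  proof -
    obtain v where "v \<in> ?T" using ne by blast
    then obtain z0 where "z0 \<in> ?T" "\<not> B z0" using ex_colours(2)[where E=E and B=B, OF bip nT] by blast
    then obtain z where z: "z \<in> ?T" "\<not> B z" and vz: "val B E False ?T = - int (card (removed E ?T z)) + val B E True (?T - removed E ?T z)"
      using val_R_ex[where B=B and E=E, OF fT] by blast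
    show ?thesis
    proof (cases "z \<in> Y")
      case True
      have "val B E False Y \<le> - int (card (removed E Y z)) + val B E True (Y - removed E Y z)"
        by (rule val_R_le[where B=B and E=E, OF fY True z(2)])
      also have "\<dots> = val B E False ?T"
        using vz remY[OF True] restY[OF True] IHY[OF True] by simp
      finally show ?thesis .
    next
      case False
      hence zA: "z \<in> A" using z by blast
      note M = mv[OF zA]
      let ?A1 = "A - removed E A z"
      have fT1: "finite (?A1 \<union> Y)" using fA fY by blast
      have "int (card (removed E (?A1 \<union> Y) (\<sigma> z))) + val B E False (?A1 \<union> Y - removed E (?A1 \<union> Y) (\<sigma> z)) \<le> val B E True (?A1 \<union> Y)"
        by (rule val_L_ge[where B=B and E=E, OF fT1]) (use M z(2) in auto)
      moreover have "?A1 \<union> Y - removed E (?A1 \<union> Y) (\<sigma> z) = (?A1 - removed E ?A1 (\<sigma> z)) \<union> Y"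
        using M by blast
      moreover have "removed E (?A1 \<union> Y) (\<sigma> z) = removed E ?A1 (\<sigma> z)" using M by blast
      moreover have "card (removed E ?A1 (\<sigma> z)) = card (removed E A z)" using M by blast
      moreover have "val B E False ((?A1 - removed E ?A1 (\<sigma> z)) \<union> Y) = val B E False Y" using M by blast
      moreover have "removed E ?T z = removed E A z" "?T - removed E ?T z = ?A1 \<union> Y" using M by blast+
      ultimately show ?thesis using vz by simp
    qed
  qed
  have iii: "val B E True Y \<le> val B E True ?T"
  proof (cases "Y = {}")
    case True
    have "val B E False A \<le> val B E True A" by (rule wNZ[where E=E and B=B, OF sym bip fA nA])
    moreover have "0 \<le> val B E False A" using ii True by (cases "A = {}") auto
    ultimately show ?thesis using True by simp
  next
    case False
    then obtain v where "v \<in> Y" by blast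
    then obtain y0 where "y0 \<in> Y" "B y0" using ex_colours(1)[where E=E and B=B, OF bip nY] by blast
    then obtain y where y: "y \<in> Y" "B y" and vy: "val B E True Y = int (card (removed E Y y)) + val B E False (Y - removed E Y y)"
      using val_L_ex[where B=B and E=E, OF fY] by blast
    have yT: "y \<in> ?T" using y by blast
    have "int (card (removed E ?T y)) + val B E False (?T - removed E ?T y) \<le> val B E True ?T"
      by (rule val_L_ge[where B=B and E=E, OF fT yT y(2)])
    thus ?thesis using vy remY[OF y(1)] restY[OF y(1)] IHY[OF y(1)] by simp
  qed
  have iv: "val B E False ?T \<le> val B E False Y"
  proof (cases "Y = {}")
    case True
    have "val B E False A \<le> val B E True A" by (rule wNZ[where E=E and B=B, OF sym bip fA nA])
    moreover have "val B E True A \<le> 0" using i True by (cases "A = {}") auto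
    ultimately show ?thesis using True by simp
  next
    case False
    then obtain v where "v \<in> Y" by blast
    then obtain y0 where "y0 \<in> Y" "\<not> B y0" using ex_colours(2)[where E=E and B=B, OF bip nY] by blast
    then obtain y where y: "y \<in> Y" "\<not> B y" and vy: "val B E False Y = - int (card (removed E Y y)) + val B E True (Y - removed E Y y)"
      using val_R_ex[where B=B and E=E, OF fY] by blast
    have yT: "y \<in> ?T" using y by blast
    have "val B E False ?T \<le> - int (card (removed E ?T y)) + val B E True (?T - removed E ?T y)"
      by (rule val_R_le[where B=B and E=E, OF fT yT y(2)])
    thus ?thesis using vy remY[OF y(1)] restY[OF y(1)] IHY[OF y(1)] by simp
  qed
  show ?case
  proof (cases "?T = {}")
    case True thus ?thesis by simp
  next
    case False
    show ?thesis using i[OF False] ii[OF False] iii iv by linarith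
  qed
qed
lemma removed_aut:
  fixes \<sigma> :: "'v \<Rightarrow> 'v"
  assumes AV: "A \<subseteq> V" and sA: "\<sigma> ` A = A" and inv: "\<forall>v\<in>V. \<sigma> (\<sigma> v) = v"
    and aut: "\<forall>a\<in>V. \<forall>b\<in>V. E (\<sigma> a) (\<sigma> b) = E a b" and xA: "x \<in> A"
  shows "removed E A (\<sigma> x) = \<sigma> ` removed E A x"
proof -
  have sxA: "\<sigma> x \<in> A" using sA xA by blast
  have sv: "\<sigma> v \<in> A" if "v \<in> A" for v using sA that by blast
  have key: "v \<in> removed E A (\<sigma> x) \<longleftrightarrow> \<sigma> v \<in> removed E A x" if vA: "v \<in> A" for v
  proof -
    have vV: "v \<in> V" and xV: "x \<in> V" using vA xA AV by blast+
    have svA: "\<sigma> v \<in> A" using sv[OF vA] .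
    have e1: "v = \<sigma> x \<longleftrightarrow> \<sigma> v = x" using inv vV xV by metis
    have e2: "E (\<sigma> x) v \<longleftrightarrow> E x (\<sigma> v)" using aut[rule_format, OF xV, of "\<sigma> v"] inv vV xV svA AV by auto
    have e3: "(\<exists>w\<in>A. w \<noteq> \<sigma> x \<and> \<not> E (\<sigma> x) w \<and> E v w) \<longleftrightarrow> (\<exists>w\<in>A. w \<noteq> x \<and> \<not> E x w \<and> E (\<sigma> v) w)"
    proof
      assume "\<exists>w\<in>A. w \<noteq> \<sigma> x \<and> \<not> E (\<sigma> x) w \<and> E v w"
      then obtain w where w: "w \<in> A" "w \<noteq> \<sigma> x" "\<not> E (\<sigma> x) w" "E v w" by blast
      have wV: "w \<in> V" using w AV by blast
      have "\<sigma> w \<in> A" "\<sigma> w \<noteq> x" "\<not> E x (\<sigma> w)" "E (\<sigma> v) (\<sigma> w)"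
        using sv[OF w(1)] w inv aut wV xV vV AV svA by (metis subsetD)+
      thus "\<exists>w\<in>A. w \<noteq> x \<and> \<not> E x w \<and> E (\<sigma> v) w" by blast
    next
      assume "\<exists>w\<in>A. w \<noteq> x \<and> \<not> E x w \<and> E (\<sigma> v) w"
      then obtain w where w: "w \<in> A" "w \<noteq> x" "\<not> E x w" "E (\<sigma> v) w" by blast
      have wV: "w \<in> V" using w AV by blast
      have "\<sigma> w \<in> A" "\<sigma> w \<noteq> \<sigma> x" "\<not> E (\<sigma> x) (\<sigma> w)" "E v (\<sigma> w)"
        using sv[OF w(1)] w inv aut wV xV vV AV svA by (metis subsetD)+
      thus "\<exists>w\<in>A. w \<noteq> \<sigma> x \<and> \<not> E (\<sigma> x) w \<and> E v w" by blast
    qed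
    show ?thesis unfolding mem_removed2[OF sxA] mem_removed2[OF xA] using e1 e2 e3 vA svA by blast
  qed
  show ?thesis
  proof (rule set_eqI)
    fix v
    show "v \<in> removed E A (\<sigma> x) \<longleftrightarrow> v \<in> \<sigma> ` removed E A x"
    proof
      assume v: "v \<in> removed E A (\<sigma> x)"
      hence vA: "v \<in> A" using removed_subset[OF sxA] by blast
      hence "\<sigma> v \<in> removed E A x" using key v by blast
      moreover have "v = \<sigma> (\<sigma> v)" using inv vA AV by auto
      ultimately show "v \<in> \<sigma> ` removed E A x" by blast
    next
      assume "v \<in> \<sigma> ` removed E A x"
      then obtain u where u: "u \<in> removed E A x" "v = \<sigma> u" by blast
      have uA: "u \<in> A" using u(1) removed_subset[OF xA] by blast
      have vA: "v \<in> A" using sv[OF uA] u(2) by simp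
      have "\<sigma> v = u" using u(2) inv uA AV by auto
      thus "v \<in> removed E A (\<sigma> x)" using key[OF vA] u(1) by simp
    qed
  qed
qed
lemma mirror_generic:
  fixes \<sigma> :: "'v \<Rightarrow> 'v" and B :: "'v \<Rightarrow> bool"
  assumes sym: "\<And>a b. E a b \<Longrightarrow> E b a" and bip: "\<And>a b. E a b \<Longrightarrow> B a \<noteq> B b"
    and sV: "\<forall>v\<in>V. \<sigma> v \<in> V" and inv: "\<forall>v\<in>V. \<sigma> (\<sigma> v) = v"
    and aut: "\<forall>a\<in>V. \<forall>b\<in>V. E (\<sigma> a) (\<sigma> b) = E a b"
    and col: "\<forall>v\<in>V. B (\<sigma> v) \<noteq> B v" and nadj: "\<forall>v\<in>V. \<not> E v (\<sigma> v)"
    and AV: "A \<subseteq> V" and sA: "\<sigma> ` A = A" and nA: "noiso E A" and xA: "x \<in> A"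
  shows "\<sigma> x \<in> A - removed E A x \<and> B (\<sigma> x) \<noteq> B x \<and>
        removed E (A - removed E A x) (\<sigma> x) = \<sigma> ` removed E A x \<and>
        removed E A x \<inter> \<sigma> ` removed E A x = {}"
proof -
  let ?y = "\<sigma> x"
  let ?R = "removed E A x" and ?R2 = "removed E A (\<sigma> x)"
  have xV: "x \<in> V" using xA AV by blast
  have yA: "?y \<in> A" using sA xA by blast
  have cxy: "B ?y \<noteq> B x" using col xV by blast
  have yx: "?y \<noteq> x" using cxy by metis
  have nxy: "\<not> E x ?y" using nadj xV by blast
  have nyx: "\<not> E ?y x" using nxy sym by blast
  have nocommon: "\<not> (E x w \<and> E ?y w)" for w
  proof
    assume "E x w \<and> E ?y w"
    hence "B x \<noteq> B w" "B ?y \<noteq> B w" using bip by blast+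
    hence "B x = B ?y" using bool_neq by metis
    thus False using cxy by simp
  qed
  have yR: "?y \<notin> ?R"
  proof -
    obtain b where b: "b \<in> A" "E ?y b" using nA yA unfolding noiso_def by blast
    have "b \<noteq> x" using b nyx by blast
    moreover have "\<not> E x b" using b nocommon by blast
    ultimately show ?thesis unfolding mem_removed2[OF xA] using yx nxy b by blast
  qed
  have R2: "?R2 = \<sigma> ` ?R" by (rule removed_aut[OF AV sA inv aut xA])
  have disj: "?R \<inter> ?R2 = {}"
  proof (rule ccontr)
    assume "?R \<inter> ?R2 \<noteq> {}"
    then obtain v where v1: "v \<in> ?R" and v2: "v \<in> ?R2" by blast
    have vA: "v \<in> A" using v1 removed_subset[OF xA] by blast
    have c1: "v = x \<or> E x v \<or> (\<forall>w\<in>A. w \<noteq> x \<longrightarrow> \<not> E x w \<longrightarrow> \<not> E v w)"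
      using v1 unfolding mem_removed2[OF xA] by blast
    have c2: "v = ?y \<or> E ?y v \<or> (\<forall>w\<in>A. w \<noteq> ?y \<longrightarrow> \<not> E ?y w \<longrightarrow> \<not> E v w)"
      using v2 unfolding mem_removed2[OF yA] by blast
    obtain b where b: "b \<in> A" "E v b" using nA vA unfolding noiso_def by blast
    show False
    proof (cases "v = x")
      case True
      thus False using c2 yx nyx b nocommon sym by metis
    next
      case vx: False
      show False
      proof (cases "E x v")
        case True
        have "v \<noteq> ?y" using True nxy by blast
        moreover have "\<not> E ?y v" using True nocommon by blast
        ultimately have "\<forall>w\<in>A. w \<noteq> ?y \<longrightarrow> \<not> E ?y w \<longrightarrow> \<not> E v w" using c2 by blast
        moreover have "E v x" using True sym by blast
        ultimately show False using xA yx nyx by metis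
      next
        case nE: False
        hence iso1: "\<forall>w\<in>A. w \<noteq> x \<longrightarrow> \<not> E x w \<longrightarrow> \<not> E v w" using c1 vx by blast
        show False
        proof (cases "v = ?y")
          case True thus False using yR v1 by blast
        next
          case vy: False
          show False
          proof (cases "E ?y v")
            case True
            hence "E v ?y" using sym by blast
            thus False using iso1 yA yx nxy by blast
          next
            case False
            hence iso2: "\<forall>w\<in>A. w \<noteq> ?y \<longrightarrow> \<not> E ?y w \<longrightarrow> \<not> E v w" using c2 vy by blast
            have "b = x \<or> E x b" using iso1 b by blast
            hence bx: "E x b" using b(2) sym nE by blast
            have "b = ?y \<or> E ?y b" using iso2 b by blast
            hence "E ?y b" using b(2) sym False by blast
            thus False using bx nocommon by blast
          qed
        qed
      qed
    qed
  qed
  let ?A1 = "A - ?R"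
  have yA1: "?y \<in> ?A1" using yA yR by blast
  have R'eq: "removed E ?A1 ?y = ?R2"
  proof (rule set_eqI, rule iffI)
    fix v assume v: "v \<in> removed E ?A1 ?y"
    have vA1: "v \<in> ?A1" using v removed_subset[OF yA1] by blast
    have c: "v = ?y \<or> E ?y v \<or> (\<forall>w\<in>?A1. w \<noteq> ?y \<longrightarrow> \<not> E ?y w \<longrightarrow> \<not> E v w)"
      using v unfolding mem_removed2[OF yA1] by blast
    show "v \<in> ?R2"
    proof (cases "v = ?y \<or> E ?y v")
      case True thus ?thesis unfolding mem_removed2[OF yA] using vA1 by blast
    next
      case False
      hence iso: "\<forall>w\<in>?A1. w \<noteq> ?y \<longrightarrow> \<not> E ?y w \<longrightarrow> \<not> E v w" using c by blast
      have "\<forall>w\<in>A. w \<noteq> ?y \<longrightarrow> \<not> E ?y w \<longrightarrow> \<not> E v w"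
      proof (intro ballI impI)
        fix w assume wA: "w \<in> A" and w1: "w \<noteq> ?y" and w2: "\<not> E ?y w"
        show "\<not> E v w"
        proof
          assume Evw: "E v w"
          have wR: "w \<in> ?R" using iso wA w1 w2 Evw by blast
          have vnR: "v \<notin> ?R" using vA1 by blast
          have vx: "v \<noteq> x" "\<not> E x v" using vnR unfolding mem_removed2[OF xA] using vA1 by blast+
          obtain u where u: "u \<in> A" "u \<noteq> x" "\<not> E x u" "E v u"
            using vnR vA1 unfolding mem_removed2[OF xA] by blast
          show False
          proof (cases "w = x")
            case True thus False using Evw vx sym by blast
          next
            case wx: False
            show False
            proof (cases "E x w")
              case True
              \<comment> \<open>then u lies in A1, hence is adjacent to y\<close>
              have uR: "u \<notin> ?R"
              proof
                assume "u \<in> ?R"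
                hence "\<forall>t\<in>A. t \<noteq> x \<longrightarrow> \<not> E x t \<longrightarrow> \<not> E u t"
                  using u unfolding mem_removed2[OF xA] by blast
                thus False using u vA1 vx sym by blast
              qed
              hence "u = ?y \<or> E ?y u" using iso u by blast
              hence "E ?y u" using u(4) vx(1) False sym by blast
              hence "B ?y \<noteq> B u" "B v \<noteq> B u" using bip u(4) by blast+
              hence byv: "B ?y = B v" using bool_neq by metis
              have "B x \<noteq> B w" "B v \<noteq> B w" using bip True Evw by blast+
              hence "B x = B v" using bool_neq by metis
              thus False using byv cxy by simp
            next
              case False
              hence "\<forall>t\<in>A. t \<noteq> x \<longrightarrow> \<not> E x t \<longrightarrow> \<not> E w t"
                using wR wx unfolding mem_removed2[OF xA] by blast
              thus False using Evw sym vA1 vx by blast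
            qed
          qed
        qed
      qed
      thus ?thesis unfolding mem_removed2[OF yA] using vA1 by blast
    qed
  next
    fix v assume v: "v \<in> ?R2"
    have vA: "v \<in> A" using v removed_subset[OF yA] by blast
    have vA1: "v \<in> ?A1" using vA v disj by blast
    have c: "v = ?y \<or> E ?y v \<or> (\<forall>w\<in>A. w \<noteq> ?y \<longrightarrow> \<not> E ?y w \<longrightarrow> \<not> E v w)"
      using v unfolding mem_removed2[OF yA] by blast
    show "v \<in> removed E ?A1 ?y" unfolding mem_removed2[OF yA1] using c vA1 by blast
  qed
  show ?thesis using yA yR cxy R'eq R2 disj by blast
qed
lemma removed_inj:
  assumes inj: "inj f" and Ef: "\<And>a b. E' (f a) (f b) = E a b"
  shows "removed E' (f ` S) (f x) = f ` removed E S x"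
proof (rule set_eqI)
  fix v
  show "v \<in> removed E' (f ` S) (f x) \<longleftrightarrow> v \<in> f ` removed E S x"
  proof (cases "v \<in> range f")
    case False
    thus ?thesis unfolding mem_removed by blast
  next
    case True
    then obtain u where u: "v = f u" by blast
    have "f u \<in> removed E' (f ` S) (f x) \<longleftrightarrow> u \<in> removed E S x"
      unfolding mem_removed Nc_def using inj Ef by (auto simp: inj_eq)
    moreover have "f u \<in> f ` removed E S x \<longleftrightarrow> u \<in> removed E S x" using inj by (simp add: inj_image_mem_iff)
    ultimately show ?thesis using u by simp
  qed
qed

lemma val_inj:
  fixes B :: "'v \<Rightarrow> bool" and B' :: "'w \<Rightarrow> bool"
  assumes inj: "inj f" and Ef: "\<And>a b. E' (f a) (f b) = E a b" and Bf: "\<And>a. B' (f a) = B a"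
  shows "finite S \<Longrightarrow> val B' E' p (f ` S) = val B E p S"
proof (induction "card S" arbitrary: S p rule: less_induct)
  case less
  show ?case
  proof (cases "S = {}")
    case True thus ?thesis by simp
  next
    case False
    have fS: "finite (f ` S)" using less.prems by simp
    have nS: "f ` S \<noteq> {}" using False by simp
    have rem: "removed E' (f ` S) (f x) = f ` removed E S x" for x by (rule removed_inj[where E=E and E'=E', OF inj Ef])
    have diff: "f ` S - f ` removed E S x = f ` (S - removed E S x)" for x
      using inj by (simp add: image_set_diff)
    have cardr: "card (f ` removed E S x) = card (removed E S x)" for x
      using inj by (simp add: card_image inj_on_subset)
    have IH: "val B' E' q (f ` (S - removed E S x)) = val B E q (S - removed E S x)" if "x \<in> S" for x q
      using less.hyps[OF card_Diff_removed_less[OF less.prems that]] less.prems by simp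
    have colB: "{u \<in> f ` S. B' u} = f ` {x \<in> S. B x}" using Bf by auto
    have colW: "{u \<in> f ` S. \<not> B' u} = f ` {x \<in> S. \<not> B x}" using Bf by auto
    show ?thesis
    proof (cases p)
      case True
      have "(\<lambda>u. int (card (removed E' (f ` S) u)) + val B' E' False (f ` S - removed E' (f ` S) u)) ` {u \<in> f ` S. B' u}
          = (\<lambda>x. int (card (removed E S x)) + val B E False (S - removed E S x)) ` {x \<in> S. B x}"
        unfolding colB image_image rem diff cardr using IH by (intro image_cong) auto
      thus ?thesis using True val_L[OF fS nS, of B' E'] val_L[OF less.prems False, of B E] by simp
    next
      case False
      have "(\<lambda>u. - int (card (removed E' (f ` S) u)) + val B' E' True (f ` S - removed E' (f ` S) u)) ` {u \<in> f ` S. \<not> B' u}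
          = (\<lambda>x. - int (card (removed E S x)) + val B E True (S - removed E S x)) ` {x \<in> S. \<not> B x}"
        unfolding colW image_image rem diff cardr using IH by (intro image_cong) auto
      thus ?thesis using False val_R[OF fS nS, of B' E'] val_R[OF less.prems \<open>S \<noteq> {}\<close>, of B E] by simp
    qed
  qed
qed
lemma psum_simps:
  "pverts (psum G X) = Inl ` pverts G \<union> Inr ` pverts X"
  "pblack (psum G X) (Inl a) = pblack G a"
  "pblack (psum G X) (Inr b) = pblack X b"
  "padj (psum G X) (Inl a) (Inl a') = padj G a a'"
  "padj (psum G X) (Inr b) (Inr b') = padj X b b'"
  "padj (psum G X) (Inl a) (Inr b) = False"
  "padj (psum G X) (Inr b) (Inl a) = False"
  by (simp_all add: psum_def pverts_def pblack_def padj_def)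

lemma is_zero_of_sigma:
  fixes G :: "'a pos" and \<sigma> :: "'a \<Rightarrow> 'a"
  assumes finG: "finite (pverts G)"
    and symG: "\<forall>a b. padj G a b \<longrightarrow> padj G b a"
    and bipG: "\<forall>a b. padj G a b \<longrightarrow> pblack G a \<noteq> pblack G b"
    and noG: "\<forall>v\<in>pverts G. \<exists>w\<in>pverts G. padj G v w"
    and sV: "\<forall>v\<in>pverts G. \<sigma> v \<in> pverts G" and inv: "\<forall>v\<in>pverts G. \<sigma> (\<sigma> v) = v"
    and aut: "\<forall>a\<in>pverts G. \<forall>b\<in>pverts G. padj G (\<sigma> a) (\<sigma> b) = padj G a b"
    and col: "\<forall>v\<in>pverts G. pblack G (\<sigma> v) \<noteq> pblack G v"
    and nadj: "\<forall>v\<in>pverts G. \<not> padj G v (\<sigma> v)"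
  shows "is_zero G TYPE('b)"
  unfolding is_zero_def
proof (intro allI impI)
  fix X :: "'b pos"
  assume vX: "valid_pos X"
  have finX: "finite (pverts X)" and symX: "\<forall>a b. padj X a b \<longrightarrow> padj X b a"
    and bipX: "\<forall>a b. padj X a b \<longrightarrow> pblack X a \<noteq> pblack X b"
    using vX unfolding valid_pos_def by blast+
  define P where "P = psum G X"
  define E where "E = padj P"
  define B where "B = pblack P"
  have EI: "E (Inl a) (Inl a') = padj G a a'" "E (Inr b) (Inr b') = padj X b b'"
    "E (Inl a) (Inr b) = False" "E (Inr b) (Inl a) = False" for a a' b b'
    unfolding E_def P_def psum_simps by simp_all
  have BI: "B (Inl a) = pblack G a" "B (Inr b) = pblack X b" for a b
    unfolding B_def P_def psum_simps by simp_all
  have sym: "E u w \<Longrightarrow> E w u" for u w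
    using symG symX by (cases u; cases w) (simp_all add: EI)
  have bip: "E u w \<Longrightarrow> B u \<noteq> B w" for u w
    using bipG bipX by (cases u; cases w) (simp_all add: EI BI)
  have PV: "pverts P = Inl ` pverts G \<union> Inr ` pverts X" unfolding P_def psum_simps ..
  have isoP: "isolated_in E (pverts P) = Inr ` isolated_in (padj X) (pverts X)"
  proof (rule set_eqI)
    fix u show "u \<in> isolated_in E (pverts P) \<longleftrightarrow> u \<in> Inr ` isolated_in (padj X) (pverts X)"
    proof (cases u)
      case (Inl a)
      have "a \<in> pverts G \<Longrightarrow> \<exists>w\<in>pverts P. E u w" using noG Inl unfolding PV by (force simp: EI)
      thus ?thesis using Inl unfolding isolated_in_def PV by auto
    next
      case (Inr b)
      have e: "(\<forall>w\<in>pverts P. \<not> E (Inr b) w) \<longleftrightarrow> (\<forall>w\<in>pverts X. \<not> padj X b w)"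
      proof
        assume h: "\<forall>w\<in>pverts P. \<not> E (Inr b) w"
        show "\<forall>w\<in>pverts X. \<not> padj X b w"
        proof (intro ballI)
          fix w assume "w \<in> pverts X"
          hence "Inr w \<in> pverts P" unfolding PV by blast
          thus "\<not> padj X b w" using h EI(2)[of b w] by blast
        qed
      next
        assume h: "\<forall>w\<in>pverts X. \<not> padj X b w"
        show "\<forall>w\<in>pverts P. \<not> E (Inr b) w"
        proof
          fix w assume "w \<in> pverts P"
          thus "\<not> E (Inr b) w" using h unfolding PV by (auto simp: EI)
        qed
      qed
      have "u \<in> isolated_in E (pverts P) \<longleftrightarrow> b \<in> isolated_in (padj X) (pverts X)"
        unfolding isolated_in_def using e Inr PV by blast
      moreover have "u \<in> Inr ` isolated_in (padj X) (pverts X) \<longleftrightarrow> b \<in> isolated_in (padj X) (pverts X)"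
        using Inr by blast
      ultimately show ?thesis by blast
    qed
  qed
  have coreP: "core P = Inl ` pverts G \<union> Inr ` core X"
  proof -
    have "core P = pverts P - isolated_in E (pverts P)" unfolding core_def E_def ..
    also have "\<dots> = pverts P - Inr ` isolated_in (padj X) (pverts X)" unfolding isoP ..
    also have "\<dots> = Inl ` pverts G \<union> Inr ` core X" unfolding PV core_def by auto
    finally show ?thesis .
  qed
  have isoS: "iso_score P = iso_score X"
  proof -
    have "{v \<in> isolated_in (padj P) (pverts P). pblack P v} = Inr ` {v \<in> isolated_in (padj X) (pverts X). pblack X v}"
      using isoP BI unfolding E_def B_def by auto
    moreover have "{v \<in> isolated_in (padj P) (pverts P). \<not> pblack P v} = Inr ` {v \<in> isolated_in (padj X) (pverts X). \<not> pblack X v}"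
      using isoP BI unfolding E_def B_def by auto
    ultimately show ?thesis unfolding iso_score_def by (simp add: card_image)
  qed
  define \<tau> :: "'a + 'b \<Rightarrow> 'a + 'b" where "\<tau> = (\<lambda>u. case u of Inl a \<Rightarrow> Inl (\<sigma> a) | Inr b \<Rightarrow> Inr b)"
  define V :: "('a + 'b) set" where "V = Inl ` pverts G"
  have tV: "\<forall>v\<in>V. \<tau> v \<in> V" using sV unfolding V_def \<tau>_def by auto
  have tinv: "\<forall>v\<in>V. \<tau> (\<tau> v) = v" using inv unfolding V_def \<tau>_def by auto
  have taut: "\<forall>a\<in>V. \<forall>b\<in>V. E (\<tau> a) (\<tau> b) = E a b" using aut unfolding V_def \<tau>_def by (auto simp: EI)
  have tcol: "\<forall>v\<in>V. B (\<tau> v) \<noteq> B v" using col unfolding V_def \<tau>_def by (auto simp: BI)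
  have tnadj: "\<forall>v\<in>V. \<not> E v (\<tau> v)" using nadj unfolding V_def \<tau>_def by (auto simp: EI)
  have tinj: "inj_on \<tau> V" using tinv by (metis inj_onI)
  define Good where "Good = (\<lambda>A. A \<subseteq> V \<and> finite A \<and> noiso E A \<and> \<tau> ` A = A)"
  define W where "W = range (Inr :: 'b \<Rightarrow> 'a + 'b)"
  have good: "finite A \<and> noiso E A \<and> A \<inter> W = {} \<and> (\<forall>a\<in>A. \<forall>b\<in>W. \<not> E a b)" if "Good A" for A
    using that unfolding Good_def V_def W_def by (auto simp: EI)
  have mirror: "\<tau> x \<in> A - removed E A x \<and> B (\<tau> x) \<noteq> B x \<and>
        card (removed E (A - removed E A x) (\<tau> x)) = card (removed E A x) \<and>
        Good (A - removed E A x - removed E (A - removed E A x) (\<tau> x))"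
    if gA: "Good A" and xA: "x \<in> A" for A x
  proof -
    have AV: "A \<subseteq> V" and fA: "finite A" and nA: "noiso E A" and tA: "\<tau> ` A = A"
      using gA unfolding Good_def by blast+
    have M: "\<tau> x \<in> A - removed E A x \<and> B (\<tau> x) \<noteq> B x \<and>
        removed E (A - removed E A x) (\<tau> x) = \<tau> ` removed E A x \<and>
        removed E A x \<inter> \<tau> ` removed E A x = {}"
      by (rule mirror_generic[where E=E and B=B, OF sym bip tV tinv taut tcol tnadj AV tA nA xA])
    let ?R = "removed E A x"
    have RA: "?R \<subseteq> A" by (rule removed_subset[OF xA])
    have RV: "?R \<subseteq> V" using RA AV by blast
    have c: "card (\<tau> ` ?R) = card ?R" by (rule card_image[OF inj_on_subset[OF tinj RV]])
    have tt: "\<tau> ` \<tau> ` ?R = ?R"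
    proof (rule set_eqI, rule iffI)
      fix v assume "v \<in> \<tau> ` \<tau> ` ?R"
      then obtain u where u: "u \<in> ?R" "v = \<tau> (\<tau> u)" by blast
      have "\<tau> (\<tau> u) = u" using tinv u(1) RV by blast
      thus "v \<in> ?R" using u by simp
    next
      fix v assume v: "v \<in> ?R"
      have "\<tau> (\<tau> v) = v" using tinv v RV by blast
      thus "v \<in> \<tau> ` \<tau> ` ?R" using v by (metis imageI)
    qed
    have "\<tau> ` (A - ?R - \<tau> ` ?R) = \<tau> ` A - \<tau> ` ?R - \<tau> ` \<tau> ` ?R"
    proof -
      have s1: "\<tau> ` ?R \<subseteq> V" using tV RV by blast
      have "\<tau> ` (A - ?R - \<tau> ` ?R) = \<tau> ` (A - ?R) - \<tau> ` \<tau> ` ?R"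
        by (rule inj_on_image_set_diff[OF tinj]) (use AV s1 in blast)+
      also have "\<tau> ` (A - ?R) = \<tau> ` A - \<tau> ` ?R"
        by (rule inj_on_image_set_diff[OF tinj]) (use AV RV in blast)+
      finally show ?thesis .
    qed
    hence "\<tau> ` (A - ?R - \<tau> ` ?R) = A - \<tau> ` ?R - ?R" unfolding tA tt .
    hence tF: "\<tau> ` (A - ?R - \<tau> ` ?R) = A - ?R - \<tau> ` ?R" by (simp only: Diff_eq Int_assoc Int_commute[of "- ?R"])
    have yA1: "\<tau> x \<in> A - ?R" using M by blast
    have nF: "noiso E (A - ?R - removed E (A - ?R) (\<tau> x))" by (rule noiso_Diff_removed[OF sym yA1])
    have eqR: "removed E (A - ?R) (\<tau> x) = \<tau> ` ?R" using M by blast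
    have g: "Good (A - ?R - removed E (A - ?R) (\<tau> x))"
      unfolding Good_def eqR using AV fA nF[unfolded eqR] tF by blast
    have c2: "card (removed E (A - ?R) (\<tau> x)) = card ?R" using c unfolding eqR .
    show ?thesis using M c2 g by blast
  qed
  let ?A = "Inl ` pverts G :: ('a + 'b) set" and ?Y = "Inr ` core X :: ('a + 'b) set"
  have gA: "Good ?A"
  proof -
    have "noiso E ?A" unfolding noiso_def
    proof
      fix u assume "u \<in> ?A"
      then obtain a where a: "a \<in> pverts G" "u = Inl a" by blast
      then obtain b where b: "b \<in> pverts G" "padj G a b" using noG by blast
      have "E u (Inl b)" using a b EI(1) by simp
      thus "\<exists>w\<in>?A. E u w" using b by blast
    qed
    moreover have "\<tau> ` ?A = ?A"
    proof
      show "\<tau> ` ?A \<subseteq> ?A" using tV unfolding V_def by blast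
      show "?A \<subseteq> \<tau> ` ?A"
      proof
        fix u assume u: "u \<in> ?A"
        hence "\<tau> u \<in> ?A" "\<tau> (\<tau> u) = u" using tV tinv unfolding V_def by blast+
        thus "u \<in> \<tau> ` ?A" by (metis imageI)
      qed
    qed
    ultimately show ?thesis unfolding Good_def V_def using finG by blast
  qed
  have coreXsub: "core X \<subseteq> pverts X" unfolding core_def by blast
  have finCX: "finite (core X)" using finite_subset[OF coreXsub finX] .
  have nY: "noiso E ?Y"
  proof -
    have "\<forall>v\<in>core X. \<exists>w\<in>core X. padj X v w"
    proof
      fix v assume v: "v \<in> core X"
      then obtain w where w: "w \<in> pverts X" "padj X v w"
        unfolding core_def isolated_in_def by blast
      have "w \<notin> isolated_in (padj X) (pverts X)"
        using w v symX coreXsub unfolding isolated_in_def by blast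
      thus "\<exists>w\<in>core X. padj X v w" using w unfolding core_def by blast
    qed
    show ?thesis unfolding noiso_def
    proof
      fix u assume "u \<in> ?Y"
      then obtain a where a: "a \<in> core X" "u = Inr a" by blast
      then obtain b where b: "b \<in> core X" "padj X a b" using \<open>\<forall>v\<in>core X. \<exists>w\<in>core X. padj X v w\<close> by blast
      have "E u (Inr b)" using a b EI(2) by simp
      thus "\<exists>w\<in>?Y. E u w" using b by blast
    qed
  qed
  have YW: "?Y \<subseteq> W" unfolding W_def by blast
  have Z: "val B E True (?A \<union> ?Y) = val B E True ?Y \<and> val B E False (?A \<union> ?Y) = val B E False ?Y"
    by (rule zero_main[where E=E and B=B and \<sigma>=\<tau> and Good=Good and W=W, OF sym bip good mirror gA YW _ nY])
       (use finCX in simp_all)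
  have emb: "val B E p ?Y = val (pblack X) (padj X) p (core X)" for p
    by (rule val_inj[OF _ _ _ finCX]) (simp_all add: EI BI)
  have L: "gval (pblack P) (padj P) (card (core P)) p (core P) = val (pblack X) (padj X) p (core X)" for p
  proof -
    have "gval (pblack P) (padj P) (card (core P)) p (core P) = val B E p (?A \<union> ?Y)"
      unfolding val_def E_def B_def coreP ..
    also have "\<dots> = val B E p ?Y" using Z by (cases p) simp_all
    also have "\<dots> = val (pblack X) (padj X) p (core X)" by (rule emb)
    finally show ?thesis .
  qed
  show "Ls (psum G X) = Ls X \<and> Rs (psum G X) = Rs X"
    unfolding Ls_def Rs_def P_def[symmetric] isoS L unfolding val_def by simp
qed
definition lin :: "nat \<Rightarrow> nat \<Rightarrow> nat \<Rightarrow> bool" where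
  "lin n a b \<longleftrightarrow> b = a + 1 \<or> a = b + 1 \<or> (a = 1 \<and> b = n) \<or> (a = n \<and> b = 1)"

lemma mod_self_range: "(a::nat) \<in> {1..n} \<Longrightarrow> a mod n = (if a = n then 0 else a)"
  by auto

lemma mod_succ_range: "2 \<le> n \<Longrightarrow> (b::nat) \<in> {1..n} \<Longrightarrow> (b + 1) mod n = (if b + 1 = n then 0 else if b = n then 1 else b + 1)"
proof -
  assume n: "2 \<le> n" and b: "b \<in> {1..n}"
  show ?thesis
  proof (cases "b = n")
    case True
    have "(1 + n) mod n = 1 mod n" by (rule mod_add_self2)
    hence "(n + 1) mod n = 1" using n by (simp add: add.commute)
    thus ?thesis using True n by simp
  next
    case False
    hence "b + 1 \<le> n" using b by auto
    thus ?thesis using False by (cases "b + 1 = n") auto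
  qed
qed

lemma cyc_lin:
  assumes "2 \<le> n" "a \<in> {1..n}" "b \<in> {1..n}"
  shows "(a mod n = (b + 1) mod n \<or> b mod n = (a + 1) mod n) \<longleftrightarrow> lin n a b"
  unfolding mod_self_range[OF assms(2)] mod_self_range[OF assms(3)]
    mod_succ_range[OF assms(1,2)] mod_succ_range[OF assms(1,3)] lin_def
  using assms by auto

lemma tor_adj_iff:
  assumes "2 \<le> n" "2 \<le> m"
  shows "tor_adj n m (i, j) (i', j') \<longleftrightarrow> (i, j) \<in> {1..n} \<times> {1..m} \<and> (i', j') \<in> {1..n} \<times> {1..m} \<and>
    ((i = i' \<and> lin m j j') \<or> (j = j' \<and> lin n i i'))"
proof -
  have "(i, j) \<in> {1..n} \<times> {1..m} \<Longrightarrow> (i', j') \<in> {1..n} \<times> {1..m} \<Longrightarrow>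
     ((j mod m = (j' + 1) mod m \<or> j' mod m = (j + 1) mod m) \<longleftrightarrow> lin m j j') \<and>
     ((i mod n = (i' + 1) mod n \<or> i' mod n = (i + 1) mod n) \<longleftrightarrow> lin n i i')"
    using cyc_lin[OF assms(2), of j j'] cyc_lin[OF assms(1), of i i'] by simp
  thus ?thesis unfolding tor_adj_def by auto
qed

lemma cyl_adj_iff:
  assumes "2 \<le> n"
  shows "cyl_adj n m (i, j) (i', j') \<longleftrightarrow> (i, j) \<in> {1..n} \<times> {1..m} \<and> (i', j') \<in> {1..n} \<times> {1..m} \<and>
    ((i = i' \<and> (j = j' + 1 \<or> j' = j + 1)) \<or> (j = j' \<and> lin n i i'))"
proof -
  have "(i, j) \<in> {1..n} \<times> {1..m} \<Longrightarrow> (i', j') \<in> {1..n} \<times> {1..m} \<Longrightarrow>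
     ((i mod n = (i' + 1) mod n \<or> i' mod n = (i + 1) mod n) \<longleftrightarrow> lin n i i')"
    using cyc_lin[OF assms(1), of i i'] by simp
  thus ?thesis unfolding cyl_adj_def by auto
qed

lemma lin_sym: "lin n a b = lin n b a"
  unfolding lin_def by auto

lemma lin_parity: "even n \<Longrightarrow> lin n a b \<Longrightarrow> even a \<noteq> even b"
  unfolding lin_def by auto

lemma lin_next: "2 \<le> n \<Longrightarrow> a \<in> {1..n} \<Longrightarrow> lin n a (if a = n then 1 else a + 1) \<and> (if a = n then 1 else a + 1) \<in> {1..n}"
  unfolding lin_def by auto
lemma torus_zero:
  fixes f g :: "nat \<Rightarrow> nat"
  assumes n: "2 \<le> n" "even n" and m: "2 \<le> m" "even m"
    and fR: "\<forall>i\<in>{1..n}. f i \<in> {1..n} \<and> f (f i) = i"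
    and fL: "\<forall>i\<in>{1..n}. \<forall>i'\<in>{1..n}. lin n (f i) (f i') = lin n i i'"
    and gR: "\<forall>j\<in>{1..m}. g j \<in> {1..m} \<and> g (g j) = j"
    and gL: "\<forall>j\<in>{1..m}. \<forall>j'\<in>{1..m}. lin m (g j) (g j') = lin m j j'"
    and col: "\<forall>i\<in>{1..n}. \<forall>j\<in>{1..m}. even (f i + g j) \<noteq> even (i + j)"
    and nadj: "\<forall>i\<in>{1..n}. \<forall>j\<in>{1..m}. \<not> ((i = f i \<and> lin m j (g j)) \<or> (j = g j \<and> lin n i (f i)))"
  shows "is_zero (torus n m) TYPE('b)"
proof -
  define \<sigma> where "\<sigma> = (\<lambda>p :: nat \<times> nat. (f (fst p), g (snd p)))"
  have PV: "pverts (torus n m) = {1..n} \<times> {1..m}" and PB: "pblack (torus n m) = grid_black"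
    and PA: "padj (torus n m) = tor_adj n m"
    unfolding torus_def pverts_def pblack_def padj_def by simp_all
  have adj: "tor_adj n m (i, j) (i', j') \<longleftrightarrow> (i, j) \<in> {1..n} \<times> {1..m} \<and> (i', j') \<in> {1..n} \<times> {1..m} \<and>
    ((i = i' \<and> lin m j j') \<or> (j = j' \<and> lin n i i'))" for i j i' j'
    by (rule tor_adj_iff[OF n(1) m(1)])
  have finj: "f i = f i' \<longleftrightarrow> i = i'" if "i \<in> {1..n}" "i' \<in> {1..n}" for i i' using fR that by metis
  have ginj: "g j = g j' \<longleftrightarrow> j = j'" if "j \<in> {1..m}" "j' \<in> {1..m}" for j j' using gR that by metis
  show ?thesis
  proof (rule is_zero_of_sigma[where \<sigma>=\<sigma>], unfold PV PB PA)
    show "finite ({1..n} \<times> {1..m})" by simp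
    show "\<forall>a b. tor_adj n m a b \<longrightarrow> tor_adj n m b a"
      using lin_sym by (auto simp: adj)
    show "\<forall>a b. tor_adj n m a b \<longrightarrow> grid_black a \<noteq> grid_black b"
    proof (intro allI impI)
      fix a b assume "tor_adj n m a b"
      thus "grid_black a \<noteq> grid_black b"
        using lin_parity[OF n(2)] lin_parity[OF m(2)]
        by (cases a; cases b) (auto simp: adj grid_black_def)
    qed
    show "\<forall>v\<in>{1..n} \<times> {1..m}. \<exists>w\<in>{1..n} \<times> {1..m}. tor_adj n m v w"
    proof
      fix v assume v: "v \<in> {1..n} \<times> {1..m}"
      obtain i j where ij: "v = (i, j)" by (cases v)
      let ?i = "if i = n then 1 else i + 1"
      have "lin n i ?i \<and> ?i \<in> {1..n}" using lin_next[OF n(1)] v ij by auto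
      hence "tor_adj n m v (?i, j) \<and> (?i, j) \<in> {1..n} \<times> {1..m}" using v ij by (auto simp: adj)
      thus "\<exists>w\<in>{1..n} \<times> {1..m}. tor_adj n m v w" by blast
    qed
    show "\<forall>v\<in>{1..n} \<times> {1..m}. \<sigma> v \<in> {1..n} \<times> {1..m}" using fR gR unfolding \<sigma>_def by auto
    show "\<forall>v\<in>{1..n} \<times> {1..m}. \<sigma> (\<sigma> v) = v" using fR gR unfolding \<sigma>_def by auto
    show "\<forall>a\<in>{1..n} \<times> {1..m}. \<forall>b\<in>{1..n} \<times> {1..m}. tor_adj n m (\<sigma> a) (\<sigma> b) = tor_adj n m a b"
    proof (intro ballI)
      fix a b assume a: "a \<in> {1..n} \<times> {1..m}" and b: "b \<in> {1..n} \<times> {1..m}"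
      obtain i j i' j' where ij: "a = (i, j)" "b = (i', j')" by (cases a; cases b)
      have r: "i \<in> {1..n}" "j \<in> {1..m}" "i' \<in> {1..n}" "j' \<in> {1..m}" using a b ij by auto
      show "tor_adj n m (\<sigma> a) (\<sigma> b) = tor_adj n m a b"
        unfolding ij \<sigma>_def fst_conv snd_conv adj using r fR gR fL gL finj[OF r(1,3)] ginj[OF r(2,4)]
        by auto
    qed
    show "\<forall>v\<in>{1..n} \<times> {1..m}. grid_black (\<sigma> v) \<noteq> grid_black v"
      using col unfolding \<sigma>_def grid_black_def by auto
    show "\<forall>v\<in>{1..n} \<times> {1..m}. \<not> tor_adj n m v (\<sigma> v)"
      using nadj unfolding \<sigma>_def by (auto simp: adj)
  qed
qed

lemma cyl_zero:
  fixes f g :: "nat \<Rightarrow> nat"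
  assumes n: "2 \<le> n" "even n"
    and fR: "\<forall>i\<in>{1..n}. f i \<in> {1..n} \<and> f (f i) = i"
    and fL: "\<forall>i\<in>{1..n}. \<forall>i'\<in>{1..n}. lin n (f i) (f i') = lin n i i'"
    and gR: "\<forall>j\<in>{1..m}. g j \<in> {1..m} \<and> g (g j) = j"
    and gL: "\<forall>j\<in>{1..m}. \<forall>j'\<in>{1..m}. (g j = g j' + 1 \<or> g j' = g j + 1) = (j = j' + 1 \<or> j' = j + 1)"
    and col: "\<forall>i\<in>{1..n}. \<forall>j\<in>{1..m}. even (f i + g j) \<noteq> even (i + j)"
    and nadj: "\<forall>i\<in>{1..n}. \<forall>j\<in>{1..m}. \<not> ((i = f i \<and> (j = g j + 1 \<or> g j = j + 1)) \<or> (j = g j \<and> lin n i (f i)))"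
  shows "is_zero (cylinder n m) TYPE('b)"
proof -
  define \<sigma> where "\<sigma> = (\<lambda>p :: nat \<times> nat. (f (fst p), g (snd p)))"
  have PV: "pverts (cylinder n m) = {1..n} \<times> {1..m}" and PB: "pblack (cylinder n m) = grid_black"
    and PA: "padj (cylinder n m) = cyl_adj n m"
    unfolding cylinder_def pverts_def pblack_def padj_def by simp_all
  have adj: "cyl_adj n m (i, j) (i', j') \<longleftrightarrow> (i, j) \<in> {1..n} \<times> {1..m} \<and> (i', j') \<in> {1..n} \<times> {1..m} \<and>
    ((i = i' \<and> (j = j' + 1 \<or> j' = j + 1)) \<or> (j = j' \<and> lin n i i'))" for i j i' j'
    by (rule cyl_adj_iff[OF n(1)])
  have finj: "f i = f i' \<longleftrightarrow> i = i'" if "i \<in> {1..n}" "i' \<in> {1..n}" for i i' using fR that by metis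
  have ginj: "g j = g j' \<longleftrightarrow> j = j'" if "j \<in> {1..m}" "j' \<in> {1..m}" for j j' using gR that by metis
  show ?thesis
  proof (rule is_zero_of_sigma[where \<sigma>=\<sigma>], unfold PV PB PA)
    show "finite ({1..n} \<times> {1..m})" by simp
    show "\<forall>a b. cyl_adj n m a b \<longrightarrow> cyl_adj n m b a"
      using lin_sym by (auto simp: adj)
    show "\<forall>a b. cyl_adj n m a b \<longrightarrow> grid_black a \<noteq> grid_black b"
    proof (intro allI impI)
      fix a b assume "cyl_adj n m a b"
      thus "grid_black a \<noteq> grid_black b"
        using lin_parity[OF n(2)]
        by (cases a; cases b) (auto simp: adj grid_black_def)
    qed
    show "\<forall>v\<in>{1..n} \<times> {1..m}. \<exists>w\<in>{1..n} \<times> {1..m}. cyl_adj n m v w"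
    proof
      fix v assume v: "v \<in> {1..n} \<times> {1..m}"
      obtain i j where ij: "v = (i, j)" by (cases v)
      let ?i = "if i = n then 1 else i + 1"
      have "lin n i ?i \<and> ?i \<in> {1..n}" using lin_next[OF n(1)] v ij by auto
      hence "cyl_adj n m v (?i, j) \<and> (?i, j) \<in> {1..n} \<times> {1..m}" using v ij by (auto simp: adj)
      thus "\<exists>w\<in>{1..n} \<times> {1..m}. cyl_adj n m v w" by blast
    qed
    show "\<forall>v\<in>{1..n} \<times> {1..m}. \<sigma> v \<in> {1..n} \<times> {1..m}" using fR gR unfolding \<sigma>_def by auto
    show "\<forall>v\<in>{1..n} \<times> {1..m}. \<sigma> (\<sigma> v) = v" using fR gR unfolding \<sigma>_def by auto
    show "\<forall>a\<in>{1..n} \<times> {1..m}. \<forall>b\<in>{1..n} \<times> {1..m}. cyl_adj n m (\<sigma> a) (\<sigma> b) = cyl_adj n m a b"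
    proof (intro ballI)
      fix a b assume a: "a \<in> {1..n} \<times> {1..m}" and b: "b \<in> {1..n} \<times> {1..m}"
      obtain i j i' j' where ij: "a = (i, j)" "b = (i', j')" by (cases a; cases b)
      have r: "i \<in> {1..n}" "j \<in> {1..m}" "i' \<in> {1..n}" "j' \<in> {1..m}" using a b ij by auto
      show "cyl_adj n m (\<sigma> a) (\<sigma> b) = cyl_adj n m a b"
        unfolding ij \<sigma>_def fst_conv snd_conv adj using r fR gR fL gL finj[OF r(1,3)] ginj[OF r(2,4)]
        by auto
    qed
    show "\<forall>v\<in>{1..n} \<times> {1..m}. grid_black (\<sigma> v) \<noteq> grid_black v"
      using col unfolding \<sigma>_def grid_black_def by auto
    show "\<forall>v\<in>{1..n} \<times> {1..m}. \<not> cyl_adj n m v (\<sigma> v)"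
      using nadj unfolding \<sigma>_def by (auto simp: adj)
  qed
qed
definition shf :: "nat \<Rightarrow> nat \<Rightarrow> nat" where
  "shf h i = (if i \<le> h then i + h else i - h)"

definition rf :: "nat \<Rightarrow> nat \<Rightarrow> nat" where
  "rf m j = m + 1 - j"

lemma shf_R: "\<forall>i\<in>{1..2*h}. shf h i \<in> {1..2*h} \<and> shf h (shf h i) = i"
  unfolding shf_def by auto

lemma shf_L: "\<forall>i\<in>{1..2*h}. \<forall>i'\<in>{1..2*h}. lin (2*h) (shf h i) (shf h i') = lin (2*h) i i'"
  unfolding shf_def lin_def by auto

lemma rf_R: "\<forall>j\<in>{1..m}. rf m j \<in> {1..m} \<and> rf m (rf m j) = j"
  unfolding rf_def by auto

lemma rf_L: "\<forall>j\<in>{1..m}. \<forall>j'\<in>{1..m}. lin m (rf m j) (rf m j') = lin m j j'"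
  unfolding rf_def lin_def by auto

lemma rf_P: "\<forall>j\<in>{1..m}. \<forall>j'\<in>{1..m}. (rf m j = rf m j' + 1 \<or> rf m j' = rf m j + 1) = (j = j' + 1 \<or> j' = j + 1)"
  unfolding rf_def by auto

lemma id_R: "\<forall>j\<in>{1..m}. id j \<in> {1..m} \<and> id (id j) = j" by simp
lemma id_L: "\<forall>j\<in>{1..m}. \<forall>j'\<in>{1..m}. lin m (id j) (id j') = lin m j j'" by simp
lemma id_P: "\<forall>j\<in>{1..m}. \<forall>j'\<in>{1..m}. (id j = id j' + 1 \<or> id j' = id j + 1) = (j = j' + 1 \<or> j' = j + 1)" by simp

lemma shf_ne: "1 \<le> h \<Longrightarrow> i \<in> {1..2*h} \<Longrightarrow> shf h i \<noteq> i"
  unfolding shf_def by auto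

lemma shf_nlin: "2 \<le> h \<Longrightarrow> i \<in> {1..2*h} \<Longrightarrow> \<not> lin (2*h) i (shf h i)"
  unfolding shf_def lin_def by auto

lemma shf_par: "odd h \<Longrightarrow> i \<in> {1..2*h} \<Longrightarrow> even (shf h i + j) \<noteq> even (i + j)"
  unfolding shf_def by (cases "i \<le> h") (auto simp: even_add)

lemma shf_rf_par: "even h \<Longrightarrow> even m \<Longrightarrow> i \<in> {1..2*h} \<Longrightarrow> j \<in> {1..m} \<Longrightarrow> even (shf h i + rf m j) \<noteq> even (i + j)"
proof -
  assume a: "even h" "even m" "i \<in> {1..2*h}" "j \<in> {1..m}"
  have "even (rf m j) \<noteq> even j" using a(2,4) unfolding rf_def by (auto simp: even_add)
  moreover have "even (shf h i) = even i" using a(1,3) unfolding shf_def by (cases "i \<le> h") (auto simp: even_add)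
  ultimately show ?thesis by (auto simp: even_add)
qed

lemma rf_ne: "even m \<Longrightarrow> rf m j \<noteq> j"
  unfolding rf_def by presburger

lemma rf2_shf_par: "even k \<Longrightarrow> i \<in> {1..2} \<Longrightarrow> j \<in> {1..2*k} \<Longrightarrow> even (rf 2 i + shf k j) \<noteq> even (i + j)"
proof -
  assume a: "even k" "i \<in> {1..2}" "j \<in> {1..2*k}"
  have "even (rf 2 i) \<noteq> even i" using a(2) unfolding rf_def by auto
  moreover have "even (shf k j) = even j" using a(1,3) unfolding shf_def by (cases "j \<le> k") (auto simp: even_add)
  ultimately show ?thesis by (auto simp: even_add)
qed
lemma torus_case:
  assumes "n > 0" "m > 0" "even n" "even m" "n \<ge> 4 \<or> m \<ge> 4"
  shows "is_zero (torus n m) TYPE('b)"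
proof -
  obtain h where h: "n = 2 * h" using assms(3) by blast
  obtain k where k: "m = 2 * k" using assms(4) by blast
  have h1: "h \<ge> 1" "k \<ge> 1" using assms(1,2) h k by auto
  have m2: "2 \<le> m" "2 \<le> 2 * h" "2 \<le> 2 * k" "even (2 * h)" "even (2 * k)" using h1 k by auto
  show ?thesis
  proof (cases "n \<ge> 4")
    case True
    hence h2: "h \<ge> 2" using h by simp
    show ?thesis
    proof (cases "odd h")
      case True
      have col: "\<forall>i\<in>{1..2*h}. \<forall>j\<in>{1..m}. even (shf h i + id j) \<noteq> even (i + j)"
        using shf_par[OF True] by simp
      have nadj: "\<forall>i\<in>{1..2*h}. \<forall>j\<in>{1..m}. \<not> ((i = shf h i \<and> lin m j (id j)) \<or> (j = id j \<and> lin (2*h) i (shf h i)))"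
      proof (intro ballI)
        fix i j assume i: "i \<in> {1..2*h}" and j: "j \<in> {1..m}"
        have "shf h i \<noteq> i" by (rule shf_ne[OF h1(1) i])
        moreover have "\<not> lin (2*h) i (shf h i)" by (rule shf_nlin[OF h2 i])
        ultimately show "\<not> ((i = shf h i \<and> lin m j (id j)) \<or> (j = id j \<and> lin (2*h) i (shf h i)))" by auto
      qed
      show ?thesis unfolding h
        by (rule torus_zero[where f="shf h" and g=id, OF m2(2) m2(4) m2(1) assms(4) shf_R shf_L id_R id_L col nadj])
    next
      case False
      have col: "\<forall>i\<in>{1..2*h}. \<forall>j\<in>{1..m}. even (shf h i + rf m j) \<noteq> even (i + j)"
        using shf_rf_par[of h m] False assms(4) by simp
      have nadj: "\<forall>i\<in>{1..2*h}. \<forall>j\<in>{1..m}. \<not> ((i = shf h i \<and> lin m j (rf m j)) \<or> (j = rf m j \<and> lin (2*h) i (shf h i)))"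
      proof (intro ballI)
        fix i j assume i: "i \<in> {1..2*h}" and j: "j \<in> {1..m}"
        have "shf h i \<noteq> i" by (rule shf_ne[OF h1(1) i])
        moreover have "rf m j \<noteq> j" by (rule rf_ne[OF assms(4)])
        ultimately show "\<not> ((i = shf h i \<and> lin m j (rf m j)) \<or> (j = rf m j \<and> lin (2*h) i (shf h i)))" by auto
      qed
      show ?thesis unfolding h
        by (rule torus_zero[where f="shf h" and g="rf m", OF m2(2) m2(4) m2(1) assms(4) shf_R shf_L rf_R rf_L col nadj])
    qed
  next
    case False
    hence n2: "n = 2" "h = 1" using assms(1,3) h by auto
    hence k2: "k \<ge> 2" using assms(5) k by simp
    have two: "(2::nat) \<le> 2" "even (2::nat)" by simp_all
    show ?thesis
    proof (cases "odd k")
      case True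
      have col: "\<forall>i\<in>{1..2}. \<forall>j\<in>{1..2*k}. even (id i + shf k j) \<noteq> even (i + j)"
      proof (intro ballI)
        fix i j assume j: "j \<in> {1..2*k}"
        have "even (shf k j + i) \<noteq> even (j + i)" by (rule shf_par[OF True j])
        thus "even (id i + shf k j) \<noteq> even (i + j)" by (metis add.commute id_apply)
      qed
      have nadj: "\<forall>i\<in>{1..2}. \<forall>j\<in>{1..2*k}. \<not> ((i = id i \<and> lin (2*k) j (shf k j)) \<or> (j = shf k j \<and> lin 2 i (id i)))"
      proof (intro ballI)
        fix i j assume i: "i \<in> {1..(2::nat)}" and j: "j \<in> {1..2*k}"
        have "shf k j \<noteq> j" by (rule shf_ne[OF h1(2) j])
        moreover have "\<not> lin (2*k) j (shf k j)" by (rule shf_nlin[OF k2 j])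
        ultimately show "\<not> ((i = id i \<and> lin (2*k) j (shf k j)) \<or> (j = shf k j \<and> lin 2 i (id i)))" by auto
      qed
      show ?thesis unfolding k n2(1)
        by (rule torus_zero[where f=id and g="shf k", OF two m2(3) m2(5) id_R id_L shf_R shf_L col nadj])
    next
      case False
      have col: "\<forall>i\<in>{1..2}. \<forall>j\<in>{1..2*k}. even (rf 2 i + shf k j) \<noteq> even (i + j)"
        using rf2_shf_par[of k] False by simp
      have nadj: "\<forall>i\<in>{1..2}. \<forall>j\<in>{1..2*k}. \<not> ((i = rf 2 i \<and> lin (2*k) j (shf k j)) \<or> (j = shf k j \<and> lin 2 i (rf 2 i)))"
      proof (intro ballI)
        fix i j assume i: "i \<in> {1..(2::nat)}" and j: "j \<in> {1..2*k}"
        have "shf k j \<noteq> j" by (rule shf_ne[OF h1(2) j])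
        moreover have "rf 2 i \<noteq> i" by (rule rf_ne) simp
        ultimately show "\<not> ((i = rf 2 i \<and> lin (2*k) j (shf k j)) \<or> (j = shf k j \<and> lin 2 i (rf 2 i)))" by auto
      qed
      show ?thesis unfolding k n2(1)
        by (rule torus_zero[where f="rf 2" and g="shf k", OF two m2(3) m2(5) rf_R rf_L shf_R shf_L col nadj])
    qed
  qed
qed

lemma cyl_case:
  assumes "n > 0" "m > 0" "even n" "(n \<ge> 4 \<and> even m) \<or> (\<exists>k>0. n = 4 * k + 2)"
  shows "is_zero (cylinder n m) TYPE('b)"
proof -
  obtain h where h: "n = 2 * h" using assms(3) by blast
  have n4: "n \<ge> 4" using assms(4) by auto
  hence h2: "h \<ge> 2" "h \<ge> 1" using h by auto
  have n2: "2 \<le> 2 * h" "even (2 * h)" using h2 by auto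
  show ?thesis
  proof (cases "odd h")
    case True
    have col: "\<forall>i\<in>{1..2*h}. \<forall>j\<in>{1..m}. even (shf h i + id j) \<noteq> even (i + j)"
      using shf_par[OF True] by simp
    have nadj: "\<forall>i\<in>{1..2*h}. \<forall>j\<in>{1..m}. \<not> ((i = shf h i \<and> (j = id j + 1 \<or> id j = j + 1)) \<or> (j = id j \<and> lin (2*h) i (shf h i)))"
    proof (intro ballI)
      fix i j assume i: "i \<in> {1..2*h}" and j: "j \<in> {1..m}"
      have "shf h i \<noteq> i" by (rule shf_ne[OF h2(2) i])
      moreover have "\<not> lin (2*h) i (shf h i)" by (rule shf_nlin[OF h2(1) i])
      ultimately show "\<not> ((i = shf h i \<and> (j = id j + 1 \<or> id j = j + 1)) \<or> (j = id j \<and> lin (2*h) i (shf h i)))" by auto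
    qed
    show ?thesis unfolding h
      by (rule cyl_zero[where f="shf h" and g=id, OF n2 shf_R shf_L id_R id_P col nadj])
  next
    case False
    have "\<not> (\<exists>k>0. n = 4 * k + 2)"
    proof
      assume "\<exists>k>0. n = 4 * k + 2"
      then obtain k where "n = 4 * k + 2" by blast
      hence "h = 2 * k + 1" using h by linarith
      thus False using False by simp
    qed
    hence em: "even m" using assms(4) by blast
    have col: "\<forall>i\<in>{1..2*h}. \<forall>j\<in>{1..m}. even (shf h i + rf m j) \<noteq> even (i + j)"
      using shf_rf_par[of h m] False em by simp
    have nadj: "\<forall>i\<in>{1..2*h}. \<forall>j\<in>{1..m}. \<not> ((i = shf h i \<and> (j = rf m j + 1 \<or> rf m j = j + 1)) \<or> (j = rf m j \<and> lin (2*h) i (shf h i)))"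
    proof (intro ballI)
      fix i j assume i: "i \<in> {1..2*h}" and j: "j \<in> {1..m}"
      have "shf h i \<noteq> i" by (rule shf_ne[OF h2(2) i])
      moreover have "rf m j \<noteq> j" by (rule rf_ne[OF em])
      ultimately show "\<not> ((i = shf h i \<and> (j = rf m j + 1 \<or> rf m j = j + 1)) \<or> (j = rf m j \<and> lin (2*h) i (shf h i)))" by auto
    qed
    show ?thesis unfolding h
      by (rule cyl_zero[where f="shf h" and g="rf m", OF n2 shf_R shf_L rf_R rf_P col nadj])
  qed
qed

theorem mainTheorem12:
  shows "(\<forall>n m. n > 0 \<and> m > 0 \<and> even n \<and> even m \<and> (n \<ge> 4 \<or> m \<ge> 4)
            \<longrightarrow> is_zero (torus n m) TYPE('b))
       \<and> (\<forall>n m. n > 0 \<and> m > 0 \<and> even n \<and> ((n \<ge> 4 \<and> even m) \<or> (\<exists>k>0. n = 4 * k + 2))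
            \<longrightarrow> is_zero (cylinder n m) TYPE('b))"
proof (intro conjI allI impI)
  fix n m :: nat
  assume a: "n > 0 \<and> m > 0 \<and> even n \<and> even m \<and> (n \<ge> 4 \<or> m \<ge> 4)"
  show "is_zero (torus n m) TYPE('b)" using torus_case[of n m] a by blast
next
  fix n m :: nat
  assume a: "n > 0 \<and> m > 0 \<and> even n \<and> ((n \<ge> 4 \<and> even m) \<or> (\<exists>k>0. n = 4 * k + 2))"
  show "is_zero (cylinder n m) TYPE('b)" using cyl_case[of n m] a by blast
qed

end
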